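(* Let $C=C(m,n;k,l;c,d)$ be a $C$-shaped supergrid graph with $a=m-k>1$ and $c=d=1$, and let $s,t$ be two distinct vertices of $C$, labeled so that $s_x\leq t_x$, such that $(C,s,t)$ satisfies none of the conditions: (F1) $s$ or $t$ is a cut vertex of $C$, or $\{s,t\}$ is a vertex cut of $C$; (F3) there is a vertex $w\in V(C)$ with $\deg(w)=1$, $w\neq s$, $w\neq t$; (F7) $m=3$, $a=2$, and either ($c=1$ and $\{s,t\}=\{(1,1),(2,2)\}$ or $\{(1,2),(2,1)\}$) or ($d=1$ and $\{s,t\}=\{(1,n),(2,n-1)\}$ or $\{(1,n-1),(2,n)\}$); (F8) $n=3$, $k=c=d=1$, and one of: (1) $a\geq 2$, $s_x=t_x=m-1$, $|s_y-t_y|=2$; (2) $a=2$, $s_x=1$, $t_x=2$, $|s_y-t_y|=2$; (3) $a>2$, $s_x<m-1$, $t=(m-1,2)$. Then $C$ contains a Hamiltonian path from $s$ to $t$.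
   Context: The supergrid graph $S^\infty$ has vertex set $\mathbb{Z}^2$, two distinct vertices $u,v$ being adjacent iff $|u_x-v_x|\leq 1$ and $|u_y-v_y|\leq 1$; a supergrid graph is a finite vertex-induced subgraph of $S^\infty$. For integers $m\geq 2$, $n\geq 3$, $k,l,c\geq 1$ with $d=n-l-c\geq 1$ and $a=m-k\geq 1$, $C(m,n;k,l;c,d)$ is the supergrid graph induced by $\{(x,y):1\leq x\leq m,\ 1\leq y\leq n\}\setminus\{(x,y): a+1\leq x\leq m,\ c+1\leq y\leq c+l\}$. A cut vertex $v$: $C-v$ disconnected; a vertex cut $V_1$: $C-V_1$ disconnected. A Hamiltonian path from $s$ to $t$ is a simple path from $s$ to $t$ visiting every vertex exactly once. The paper assumes throughout that the given vertices are named so that $s_x\leq t_x$. *)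

theory Defs
  imports Main
begin

type_synonym vtx = "int \<times> int"

definition sg_adj :: "vtx \<Rightarrow> vtx \<Rightarrow> bool" where
  "sg_adj u v \<longleftrightarrow> u \<noteq> v \<and> \<bar>fst u - fst v\<bar> \<le> 1 \<and> \<bar>snd u - snd v\<bar> \<le> 1"

definition Cshape :: "int \<Rightarrow> int \<Rightarrow> int \<Rightarrow> int \<Rightarrow> int \<Rightarrow> vtx set" where
  "Cshape m n k l c =
     {(x, y). 1 \<le> x \<and> x \<le> m \<and> 1 \<le> y \<and> y \<le> n}
     - {(x, y). m - k + 1 \<le> x \<and> x \<le> m \<and> c + 1 \<le> y \<and> y \<le> c + l}"

definition sg_walk :: "vtx set \<Rightarrow> vtx list \<Rightarrow> bool" where
  "sg_walk V P \<longleftrightarrow> P \<noteq> [] \<and> set P \<subseteq> V \<and> (\<forall>i. Suc i < length P \<longrightarrow> sg_adj (P ! i) (P ! Suc i))"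

definition sg_connected :: "vtx set \<Rightarrow> bool" where
  "sg_connected V \<longleftrightarrow> (\<forall>u\<in>V. \<forall>v\<in>V. \<exists>P. sg_walk V P \<and> hd P = u \<and> last P = v)"

definition cut_vertex :: "vtx set \<Rightarrow> vtx \<Rightarrow> bool" where
  "cut_vertex V v \<longleftrightarrow> v \<in> V \<and> \<not> sg_connected (V - {v})"

definition vertex_cut :: "vtx set \<Rightarrow> vtx set \<Rightarrow> bool" where
  "vertex_cut V U \<longleftrightarrow> U \<subseteq> V \<and> \<not> sg_connected (V - U)"

definition sg_deg :: "vtx set \<Rightarrow> vtx \<Rightarrow> nat" where
  "sg_deg V w = card {u \<in> V. sg_adj w u}"

definition hamiltonian_path :: "vtx set \<Rightarrow> vtx \<Rightarrow> vtx \<Rightarrow> vtx list \<Rightarrow> bool" where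
  "hamiltonian_path V s t P \<longleftrightarrow>
     sg_walk V P \<and> distinct P \<and> set P = V \<and> hd P = s \<and> last P = t"

definition F1 :: "vtx set \<Rightarrow> vtx \<Rightarrow> vtx \<Rightarrow> bool" where
  "F1 V s t \<longleftrightarrow> cut_vertex V s \<or> cut_vertex V t \<or> vertex_cut V {s, t}"

definition F3 :: "vtx set \<Rightarrow> vtx \<Rightarrow> vtx \<Rightarrow> bool" where
  "F3 V s t \<longleftrightarrow> (\<exists>w\<in>V. sg_deg V w = 1 \<and> w \<noteq> s \<and> w \<noteq> t)"

definition F7 :: "int \<Rightarrow> int \<Rightarrow> int \<Rightarrow> int \<Rightarrow> int \<Rightarrow> vtx \<Rightarrow> vtx \<Rightarrow> bool" where
  "F7 m n a c d s t \<longleftrightarrow> m = 3 \<and> a = 2 \<and>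
     ((c = 1 \<and> ({s, t} = {(1,1), (2,2)} \<or> {s, t} = {(1,2), (2,1)})) \<or>
      (d = 1 \<and> ({s, t} = {(1,n), (2,n-1)} \<or> {s, t} = {(1,n-1), (2,n)})))"

definition F8 :: "int \<Rightarrow> int \<Rightarrow> int \<Rightarrow> int \<Rightarrow> int \<Rightarrow> int \<Rightarrow> vtx \<Rightarrow> vtx \<Rightarrow> bool" where
  "F8 m n a k c d s t \<longleftrightarrow> n = 3 \<and> k = 1 \<and> c = 1 \<and> d = 1 \<and>
     ((a \<ge> 2 \<and> fst s = m - 1 \<and> fst t = m - 1 \<and> \<bar>snd s - snd t\<bar> = 2) \<or>
      (a = 2 \<and> fst s = 1 \<and> fst t = 2 \<and> \<bar>snd s - snd t\<bar> = 2) \<or>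
      (a > 2 \<and> fst s < m - 1 \<and> t = (m - 1, 2)))"

end

theory Submission
  imports Defs
begin


definition HP :: "vtx set \<Rightarrow> vtx \<Rightarrow> vtx \<Rightarrow> bool" where
  "HP V s t \<longleftrightarrow> (\<exists>P. hamiltonian_path V s t P)"

definition rect :: "int \<Rightarrow> int \<Rightarrow> int \<Rightarrow> int \<Rightarrow> vtx set" where
  "rect x0 x1 y0 y1 = {(x, y). x0 \<le> x \<and> x \<le> x1 \<and> y0 \<le> y \<and> y \<le> y1}"

lemma mem_rect[simp]: "((x, y) \<in> rect x0 x1 y0 y1) \<longleftrightarrow> x0 \<le> x \<and> x \<le> x1 \<and> y0 \<le> y \<and> y \<le> y1"
  by (simp add: rect_def)

lemma adj_iff[simp]: "sg_adj (x, y) (x', y') \<longleftrightarrow> (x \<noteq> x' \<or> y \<noteq> y') \<and> \<bar>x - x'\<bar> \<le> 1 \<and> \<bar>y - y'\<bar> \<le> 1"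
  by (auto simp: sg_adj_def)

lemma HP_single: "HP {v} v v"
  unfolding HP_def hamiltonian_path_def sg_walk_def by (rule exI[of _ "[v]"]) auto

lemma HP_join:
  assumes "HP A s u" "HP B v t" "A \<inter> B = {}" "sg_adj u v"
  shows "HP (A \<union> B) s t"
proof -
  obtain P where P: "hamiltonian_path A s u P" using assms(1) HP_def by auto
  obtain Q where Q: "hamiltonian_path B v t Q" using assms(2) HP_def by auto
  have Pne: "P \<noteq> []" and Qne: "Q \<noteq> []" using P Q by (auto simp: hamiltonian_path_def sg_walk_def)
  have "hamiltonian_path (A \<union> B) s t (P @ Q)"
    unfolding hamiltonian_path_def sg_walk_def
  proof (intro conjI allI impI)
    show "P @ Q \<noteq> []" using Pne by simp
    show "set (P @ Q) \<subseteq> A \<union> B" using P Q by (auto simp: hamiltonian_path_def)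
    show "distinct (P @ Q)" using P Q assms(3) by (auto simp: hamiltonian_path_def)
    show "set (P @ Q) = A \<union> B" using P Q by (auto simp: hamiltonian_path_def)
    show "hd (P @ Q) = s" using P Pne by (auto simp: hamiltonian_path_def)
    show "last (P @ Q) = t" using Q Qne by (auto simp: hamiltonian_path_def)
  next
    fix i assume i: "Suc i < length (P @ Q)"
    show "sg_adj ((P @ Q) ! i) ((P @ Q) ! Suc i)"
    proof (cases "Suc i < length P")
      case True
      then show ?thesis using P by (auto simp: hamiltonian_path_def sg_walk_def nth_append)
    next
      case False
      show ?thesis
      proof (cases "i < length P")
        case True
        with False have "i = length P - 1" by simp
        then have "(P @ Q) ! i = last P" "(P @ Q) ! Suc i = hd Q"
          using Pne Qne True False by (auto simp: nth_append last_conv_nth hd_conv_nth)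
        then show ?thesis using P Q assms(4) by (auto simp: hamiltonian_path_def)
      next
        case False2: False
        then have "Suc (i - length P) < length Q" using i by auto
        then show ?thesis using Q False2 by (auto simp: hamiltonian_path_def sg_walk_def nth_append Suc_diff_le)
      qed
    qed
  qed
  then show ?thesis unfolding HP_def by blast
qed

lemma HP_rev: assumes "HP V s t" shows "HP V t s"
proof -
  obtain P where P: "hamiltonian_path V s t P" using assms HP_def by auto
  have Pne: "P \<noteq> []" using P by (auto simp: hamiltonian_path_def sg_walk_def)
  have "hamiltonian_path V t s (rev P)"
    unfolding hamiltonian_path_def sg_walk_def
  proof (intro conjI allI impI)
    show "rev P \<noteq> []" using Pne by simp
    show "set (rev P) \<subseteq> V" "distinct (rev P)" "set (rev P) = V" using P by (auto simp: hamiltonian_path_def)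
    show "hd (rev P) = t" "last (rev P) = s" using P Pne by (auto simp: hamiltonian_path_def hd_rev last_rev)
  next
    fix i assume i: "Suc i < length (rev P)"
    have a: "sg_adj (P ! (length P - Suc (Suc i))) (P ! Suc (length P - Suc (Suc i)))"
      using P i by (auto simp: hamiltonian_path_def sg_walk_def)
    have e: "Suc (length P - Suc (Suc i)) = length P - Suc i" using i by auto
    show "sg_adj (rev P ! i) (rev P ! Suc i)"
      using a i by (simp add: rev_nth e sg_adj_def abs_minus_commute) (metis abs_minus_commute)
  qed
  then show ?thesis unfolding HP_def by blast
qed

lemma HP_map:
  assumes "HP V s t" and inv: "\<And>u. g (f u) = u" and inv2: "\<And>w. f (g w) = w"
    and adj: "\<And>u v. sg_adj (f u) (f v) = sg_adj u v"
    and W: "W = {w. g w \<in> V}"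
  shows "HP W (f s) (f t)"
proof -
  obtain P where P: "hamiltonian_path V s t P" using assms HP_def by auto
  have Pne: "P \<noteq> []" using P by (auto simp: hamiltonian_path_def sg_walk_def)
  have inj: "inj f" by (metis inv injI)
  have "hamiltonian_path W (f s) (f t) (map f P)"
    unfolding hamiltonian_path_def sg_walk_def
  proof (intro conjI allI impI)
    show "map f P \<noteq> []" using Pne by simp
    show "set (map f P) \<subseteq> W" using P by (auto simp: hamiltonian_path_def W inv)
    show "distinct (map f P)" using P inj by (auto simp: hamiltonian_path_def distinct_map inj_on_def)
    show "set (map f P) = W" using P by (auto simp: hamiltonian_path_def W inv image_iff) (metis inv2)
    show "hd (map f P) = f s" "last (map f P) = f t" using P Pne by (auto simp: hamiltonian_path_def hd_map last_map)
  next
    fix i assume i: "Suc i < length (map f P)"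
    then show "sg_adj (map f P ! i) (map f P ! Suc i)" using P adj by (auto simp: hamiltonian_path_def sg_walk_def)
  qed
  then show ?thesis unfolding HP_def by blast
qed

lemma HP_join2: "HP A s u \<Longrightarrow> HP B v t \<Longrightarrow> A \<inter> B = {} \<Longrightarrow> sg_adj u v \<Longrightarrow> A \<union> B = C \<Longrightarrow> HP C s t"
  using HP_join by blast

lemma HP_cong: "HP A s t \<Longrightarrow> A = B \<Longrightarrow> HP B s t" by simp

definition fxr :: "int \<Rightarrow> vtx \<Rightarrow> vtx" where "fxr c w = (c - fst w, snd w)"
definition fyr :: "int \<Rightarrow> vtx \<Rightarrow> vtx" where "fyr c w = (fst w, c - snd w)"

lemma fxr_simp[simp]: "fxr c (x, y) = (c - x, y)" by (simp add: fxr_def)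
lemma fyr_simp[simp]: "fyr c (x, y) = (x, c - y)" by (simp add: fyr_def)

lemma HP_fx: assumes "HP V s t" shows "HP {w. fxr c w \<in> V} (fxr c s) (fxr c t)"
  by (rule HP_map[OF assms, of "fxr c"]) (auto simp: fxr_def sg_adj_def prod_eq_iff abs_minus_commute)

lemma HP_fy: assumes "HP V s t" shows "HP {w. fyr c w \<in> V} (fyr c s) (fyr c t)"
  by (rule HP_map[OF assms, of "fyr c"]) (auto simp: fyr_def sg_adj_def prod_eq_iff abs_minus_commute)

lemma HP_fx': assumes "HP V s t" "W = {w. fxr c w \<in> V}" "s' = fxr c s" "t' = fxr c t" shows "HP W s' t'"
  using HP_fx[OF assms(1)] assms by simp
lemma HP_fy': assumes "HP V s t" "W = {w. fyr c w \<in> V}" "s' = fyr c s" "t' = fyr c t" shows "HP W s' t'"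
  using HP_fy[OF assms(1)] assms by simp

lemma fx_rect: "{w. fxr c w \<in> rect x0 x1 y0 y1} = rect (c - x1) (c - x0) y0 y1"
  by (auto simp: fxr_def rect_def)
lemma fy_rect: "{w. fyr c w \<in> rect x0 x1 y0 y1} = rect x0 x1 (c - y1) (c - y0)"
  by (auto simp: fyr_def rect_def)

lemma col_hp: "y0 \<le> y1 \<Longrightarrow> HP (rect x x y0 y1) (x, y0) (x, y1)"
proof (induction "nat (y1 - y0)" arbitrary: y0)
  case 0
  then have "y1 = y0" by simp
  then have "rect x x y0 y1 = {(x, y0)}" by auto
  then show ?case using HP_single \<open>y1 = y0\<close> by simp
next
  case (Suc k)
  then have IH: "HP (rect x x (y0 + 1) y1) (x, y0 + 1) (x, y1)" by simp
  have "HP ({(x, y0)} \<union> rect x x (y0 + 1) y1) (x, y0) (x, y1)"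
    by (rule HP_join[OF HP_single IH]) auto
  moreover have "{(x, y0)} \<union> rect x x (y0 + 1) y1 = rect x x y0 y1" using Suc by auto
  ultimately show ?case by simp
qed

lemma row_hp: "x0 \<le> x1 \<Longrightarrow> HP (rect x0 x1 y y) (x0, y) (x1, y)"
proof (induction "nat (x1 - x0)" arbitrary: x0)
  case 0
  then have "x1 = x0" by simp
  then have "rect x0 x1 y y = {(x0, y)}" by auto
  then show ?case using HP_single \<open>x1 = x0\<close> by simp
next
  case (Suc k)
  then have IH: "HP (rect (x0 + 1) x1 y y) (x0 + 1, y) (x1, y)" by simp
  have "HP ({(x0, y)} \<union> rect (x0 + 1) x1 y y) (x0, y) (x1, y)"
    by (rule HP_join[OF HP_single IH]) auto
  moreover have "{(x0, y)} \<union> rect (x0 + 1) x1 y y = rect x0 x1 y y" using Suc by auto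
  ultimately show ?case by simp
qed

lemma chain2:
  assumes "HP A1 s u1"
    and "HP A2 v1 t"
    and "(A1) \<inter> A2 = {}"
    and "sg_adj u1 v1"
    and "A1 \<union> A2 = D"
  shows "HP D s t"
  using HP_join assms by blast

lemma chain3:
  assumes "HP A1 s u1"
    and "HP A2 v1 u2"
    and "HP A3 v2 t"
    and "(A1) \<inter> A2 = {}"
    and "(A1 \<union> A2) \<inter> A3 = {}"
    and "sg_adj u1 v1"
    and "sg_adj u2 v2"
    and "A1 \<union> A2 \<union> A3 = D"
  shows "HP D s t"
proof -
  have "HP (A1 \<union> A2) s u2"
    by (rule chain2[OF assms(1) assms(2) assms(4) assms(6)]) simp
  then show ?thesis by (rule HP_join2[OF _ assms(3) assms(5) assms(7) assms(8)])
qed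

lemma chain4:
  assumes "HP A1 s u1"
    and "HP A2 v1 u2"
    and "HP A3 v2 u3"
    and "HP A4 v3 t"
    and "(A1) \<inter> A2 = {}"
    and "(A1 \<union> A2) \<inter> A3 = {}"
    and "(A1 \<union> A2 \<union> A3) \<inter> A4 = {}"
    and "sg_adj u1 v1"
    and "sg_adj u2 v2"
    and "sg_adj u3 v3"
    and "A1 \<union> A2 \<union> A3 \<union> A4 = D"
  shows "HP D s t"
proof -
  have "HP (A1 \<union> A2 \<union> A3) s u3"
    by (rule chain3[OF assms(1) assms(2) assms(3) assms(5) assms(6) assms(8) assms(9)]) simp
  then show ?thesis by (rule HP_join2[OF _ assms(4) assms(7) assms(10) assms(11)])
qed

lemma chain5:
  assumes "HP A1 s u1"
    and "HP A2 v1 u2"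
    and "HP A3 v2 u3"
    and "HP A4 v3 u4"
    and "HP A5 v4 t"
    and "(A1) \<inter> A2 = {}"
    and "(A1 \<union> A2) \<inter> A3 = {}"
    and "(A1 \<union> A2 \<union> A3) \<inter> A4 = {}"
    and "(A1 \<union> A2 \<union> A3 \<union> A4) \<inter> A5 = {}"
    and "sg_adj u1 v1"
    and "sg_adj u2 v2"
    and "sg_adj u3 v3"
    and "sg_adj u4 v4"
    and "A1 \<union> A2 \<union> A3 \<union> A4 \<union> A5 = D"
  shows "HP D s t"
proof -
  have "HP (A1 \<union> A2 \<union> A3 \<union> A4) s u4"
    by (rule chain4[OF assms(1) assms(2) assms(3) assms(4) assms(6) assms(7) assms(8) assms(10) assms(11) assms(12)]) simp
  then show ?thesis by (rule HP_join2[OF _ assms(5) assms(9) assms(13) assms(14)])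
qed

lemma chain6:
  assumes "HP A1 s u1"
    and "HP A2 v1 u2"
    and "HP A3 v2 u3"
    and "HP A4 v3 u4"
    and "HP A5 v4 u5"
    and "HP A6 v5 t"
    and "(A1) \<inter> A2 = {}"
    and "(A1 \<union> A2) \<inter> A3 = {}"
    and "(A1 \<union> A2 \<union> A3) \<inter> A4 = {}"
    and "(A1 \<union> A2 \<union> A3 \<union> A4) \<inter> A5 = {}"
    and "(A1 \<union> A2 \<union> A3 \<union> A4 \<union> A5) \<inter> A6 = {}"
    and "sg_adj u1 v1"
    and "sg_adj u2 v2"
    and "sg_adj u3 v3"
    and "sg_adj u4 v4"
    and "sg_adj u5 v5"
    and "A1 \<union> A2 \<union> A3 \<union> A4 \<union> A5 \<union> A6 = D"
  shows "HP D s t"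
proof -
  have "HP (A1 \<union> A2 \<union> A3 \<union> A4 \<union> A5) s u5"
    by (rule chain5[OF assms(1) assms(2) assms(3) assms(4) assms(5) assms(7) assms(8) assms(9) assms(10) assms(12) assms(13) assms(14) assms(15)]) simp
  then show ?thesis by (rule HP_join2[OF _ assms(6) assms(11) assms(16) assms(17)])
qed

lemma chain7:
  assumes "HP A1 s u1"
    and "HP A2 v1 u2"
    and "HP A3 v2 u3"
    and "HP A4 v3 u4"
    and "HP A5 v4 u5"
    and "HP A6 v5 u6"
    and "HP A7 v6 t"
    and "(A1) \<inter> A2 = {}"
    and "(A1 \<union> A2) \<inter> A3 = {}"
    and "(A1 \<union> A2 \<union> A3) \<inter> A4 = {}"
    and "(A1 \<union> A2 \<union> A3 \<union> A4) \<inter> A5 = {}"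
    and "(A1 \<union> A2 \<union> A3 \<union> A4 \<union> A5) \<inter> A6 = {}"
    and "(A1 \<union> A2 \<union> A3 \<union> A4 \<union> A5 \<union> A6) \<inter> A7 = {}"
    and "sg_adj u1 v1"
    and "sg_adj u2 v2"
    and "sg_adj u3 v3"
    and "sg_adj u4 v4"
    and "sg_adj u5 v5"
    and "sg_adj u6 v6"
    and "A1 \<union> A2 \<union> A3 \<union> A4 \<union> A5 \<union> A6 \<union> A7 = D"
  shows "HP D s t"
proof -
  have "HP (A1 \<union> A2 \<union> A3 \<union> A4 \<union> A5 \<union> A6) s u6"
    by (rule chain6[OF assms(1) assms(2) assms(3) assms(4) assms(5) assms(6) assms(8) assms(9) assms(10) assms(11) assms(12) assms(14) assms(15) assms(16) assms(17) assms(18)]) simp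
  then show ?thesis by (rule HP_join2[OF _ assms(7) assms(13) assms(19) assms(20)])
qed

lemma chain8:
  assumes "HP A1 s u1"
    and "HP A2 v1 u2"
    and "HP A3 v2 u3"
    and "HP A4 v3 u4"
    and "HP A5 v4 u5"
    and "HP A6 v5 u6"
    and "HP A7 v6 u7"
    and "HP A8 v7 t"
    and "(A1) \<inter> A2 = {}"
    and "(A1 \<union> A2) \<inter> A3 = {}"
    and "(A1 \<union> A2 \<union> A3) \<inter> A4 = {}"
    and "(A1 \<union> A2 \<union> A3 \<union> A4) \<inter> A5 = {}"
    and "(A1 \<union> A2 \<union> A3 \<union> A4 \<union> A5) \<inter> A6 = {}"
    and "(A1 \<union> A2 \<union> A3 \<union> A4 \<union> A5 \<union> A6) \<inter> A7 = {}"
    and "(A1 \<union> A2 \<union> A3 \<union> A4 \<union> A5 \<union> A6 \<union> A7) \<inter> A8 = {}"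
    and "sg_adj u1 v1"
    and "sg_adj u2 v2"
    and "sg_adj u3 v3"
    and "sg_adj u4 v4"
    and "sg_adj u5 v5"
    and "sg_adj u6 v6"
    and "sg_adj u7 v7"
    and "A1 \<union> A2 \<union> A3 \<union> A4 \<union> A5 \<union> A6 \<union> A7 \<union> A8 = D"
  shows "HP D s t"
proof -
  have "HP (A1 \<union> A2 \<union> A3 \<union> A4 \<union> A5 \<union> A6 \<union> A7) s u7"
    by (rule chain7[OF assms(1) assms(2) assms(3) assms(4) assms(5) assms(6) assms(7) assms(9) assms(10) assms(11) assms(12) assms(13) assms(14) assms(16) assms(17) assms(18) assms(19) assms(20) assms(21)]) simp
  then show ?thesis by (rule HP_join2[OF _ assms(8) assms(15) assms(22) assms(23)])
qed

lemma chain9: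
  assumes "HP A1 s u1"
    and "HP A2 v1 u2"
    and "HP A3 v2 u3"
    and "HP A4 v3 u4"
    and "HP A5 v4 u5"
    and "HP A6 v5 u6"
    and "HP A7 v6 u7"
    and "HP A8 v7 u8"
    and "HP A9 v8 t"
    and "(A1) \<inter> A2 = {}"
    and "(A1 \<union> A2) \<inter> A3 = {}"
    and "(A1 \<union> A2 \<union> A3) \<inter> A4 = {}"
    and "(A1 \<union> A2 \<union> A3 \<union> A4) \<inter> A5 = {}"
    and "(A1 \<union> A2 \<union> A3 \<union> A4 \<union> A5) \<inter> A6 = {}"
    and "(A1 \<union> A2 \<union> A3 \<union> A4 \<union> A5 \<union> A6) \<inter> A7 = {}"
    and "(A1 \<union> A2 \<union> A3 \<union> A4 \<union> A5 \<union> A6 \<union> A7) \<inter> A8 = {}"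
    and "(A1 \<union> A2 \<union> A3 \<union> A4 \<union> A5 \<union> A6 \<union> A7 \<union> A8) \<inter> A9 = {}"
    and "sg_adj u1 v1"
    and "sg_adj u2 v2"
    and "sg_adj u3 v3"
    and "sg_adj u4 v4"
    and "sg_adj u5 v5"
    and "sg_adj u6 v6"
    and "sg_adj u7 v7"
    and "sg_adj u8 v8"
    and "A1 \<union> A2 \<union> A3 \<union> A4 \<union> A5 \<union> A6 \<union> A7 \<union> A8 \<union> A9 = D"
  shows "HP D s t"
proof -
  have "HP (A1 \<union> A2 \<union> A3 \<union> A4 \<union> A5 \<union> A6 \<union> A7 \<union> A8) s u8"
    by (rule chain8[OF assms(1) assms(2) assms(3) assms(4) assms(5) assms(6) assms(7) assms(8) assms(10) assms(11) assms(12) assms(13) assms(14) assms(15) assms(16) assms(18) assms(19) assms(20) assms(21) assms(22) assms(23) assms(24)]) simp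
  then show ?thesis by (rule HP_join2[OF _ assms(9) assms(17) assms(25) assms(26)])
qed

lemma chain10:
  assumes "HP A1 s u1"
    and "HP A2 v1 u2"
    and "HP A3 v2 u3"
    and "HP A4 v3 u4"
    and "HP A5 v4 u5"
    and "HP A6 v5 u6"
    and "HP A7 v6 u7"
    and "HP A8 v7 u8"
    and "HP A9 v8 u9"
    and "HP A10 v9 t"
    and "(A1) \<inter> A2 = {}"
    and "(A1 \<union> A2) \<inter> A3 = {}"
    and "(A1 \<union> A2 \<union> A3) \<inter> A4 = {}"
    and "(A1 \<union> A2 \<union> A3 \<union> A4) \<inter> A5 = {}"
    and "(A1 \<union> A2 \<union> A3 \<union> A4 \<union> A5) \<inter> A6 = {}"
    and "(A1 \<union> A2 \<union> A3 \<union> A4 \<union> A5 \<union> A6) \<inter> A7 = {}"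
    and "(A1 \<union> A2 \<union> A3 \<union> A4 \<union> A5 \<union> A6 \<union> A7) \<inter> A8 = {}"
    and "(A1 \<union> A2 \<union> A3 \<union> A4 \<union> A5 \<union> A6 \<union> A7 \<union> A8) \<inter> A9 = {}"
    and "(A1 \<union> A2 \<union> A3 \<union> A4 \<union> A5 \<union> A6 \<union> A7 \<union> A8 \<union> A9) \<inter> A10 = {}"
    and "sg_adj u1 v1"
    and "sg_adj u2 v2"
    and "sg_adj u3 v3"
    and "sg_adj u4 v4"
    and "sg_adj u5 v5"
    and "sg_adj u6 v6"
    and "sg_adj u7 v7"
    and "sg_adj u8 v8"
    and "sg_adj u9 v9"
    and "A1 \<union> A2 \<union> A3 \<union> A4 \<union> A5 \<union> A6 \<union> A7 \<union> A8 \<union> A9 \<union> A10 = D"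
  shows "HP D s t"
proof -
  have "HP (A1 \<union> A2 \<union> A3 \<union> A4 \<union> A5 \<union> A6 \<union> A7 \<union> A8 \<union> A9) s u9"
    by (rule chain9[OF assms(1) assms(2) assms(3) assms(4) assms(5) assms(6) assms(7) assms(8) assms(9) assms(11) assms(12) assms(13) assms(14) assms(15) assms(16) assms(17) assms(18) assms(20) assms(21) assms(22) assms(23) assms(24) assms(25) assms(26) assms(27)]) simp
  then show ?thesis by (rule HP_join2[OF _ assms(10) assms(19) assms(28) assms(29)])
qed



lemma P2_bl:
  "x0 \<le> x1 \<Longrightarrow> y0 \<le> y1 \<Longrightarrow> t \<in> rect x0 x1 y0 y1 \<Longrightarrow> t \<noteq> (x0, y0)
   \<Longrightarrow> (x0 = x1 \<Longrightarrow> t = (x0, y1)) \<Longrightarrow> (y0 = y1 \<Longrightarrow> t = (x1, y0))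
   \<Longrightarrow> HP (rect x0 x1 y0 y1) (x0, y0) t"
proof (induction "nat (x1 - x0 + (y1 - y0))" arbitrary: x0 x1 y0 y1 t rule: less_induct)
  case less
  obtain i j where t: "t = (i, j)" by fastforce
  note IH = less.hyps
  have IHx: "HP (rect x0' x1' y0' y1') (x1', y0') t'"
    if "x1' - x0' + (y1' - y0') < x1 - x0 + (y1 - y0)" "x0' \<le> x1'" "y0' \<le> y1'" "t' \<in> rect x0' x1' y0' y1'"
      "t' \<noteq> (x1', y0')" "x0' = x1' \<Longrightarrow> t' = (x0', y1')" "y0' = y1' \<Longrightarrow> t' = (x0', y0')"
    for x0' x1' y0' y1' t'
  proof -
    obtain i' j' where t': "t' = (i', j')" by fastforce
    have "HP (rect x0' x1' y0' y1') (x0', y0') (x0' + x1' - i', j')"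
      using that t' by (intro IH) auto
    then have "HP {w. fxr (x0' + x1') w \<in> rect x0' x1' y0' y1'} (fxr (x0' + x1') (x0', y0')) (fxr (x0' + x1') (x0' + x1' - i', j'))"
      by (rule HP_fx)
    then show ?thesis using t' by (simp add: fx_rect)
  qed
  have IHy: "HP (rect x0' x1' y0' y1') (x0', y1') t'"
    if "x1' - x0' + (y1' - y0') < x1 - x0 + (y1 - y0)" "x0' \<le> x1'" "y0' \<le> y1'" "t' \<in> rect x0' x1' y0' y1'"
      "t' \<noteq> (x0', y1')" "x0' = x1' \<Longrightarrow> t' = (x0', y0')" "y0' = y1' \<Longrightarrow> t' = (x1', y0')"
    for x0' x1' y0' y1' t'
  proof -
    obtain i' j' where t': "t' = (i', j')" by fastforce
    have "HP (rect x0' x1' y0' y1') (x0', y0') (i', y0' + y1' - j')"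
      using that t' by (intro IH) auto
    then have "HP {w. fyr (y0' + y1') w \<in> rect x0' x1' y0' y1'} (fyr (y0' + y1') (x0', y0')) (fyr (y0' + y1') (i', y0' + y1' - j'))"
      by (rule HP_fy)
    then show ?thesis using t' by (simp add: fy_rect)
  qed
  have IH0: "HP (rect x0' x1' y0' y1') (x0', y0') t'"
    if "x1' - x0' + (y1' - y0') < x1 - x0 + (y1 - y0)" "x0' \<le> x1'" "y0' \<le> y1'" "t' \<in> rect x0' x1' y0' y1'"
      "t' \<noteq> (x0', y0')" "x0' = x1' \<Longrightarrow> t' = (x0', y1')" "y0' = y1' \<Longrightarrow> t' = (x1', y0')"
    for x0' x1' y0' y1' t'
    using that by (intro IH) auto
  show ?case
  proof (cases "x0 = x1")
    case True
    then show ?thesis using less col_hp by auto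
  next
    case xne: False
    show ?thesis
    proof (cases "y0 = y1")
      case True
      then show ?thesis using less row_hp by auto
    next
      case yne: False
      have xl: "x0 < x1" and yl: "y0 < y1" using xne yne less by auto
      have ti: "x0 \<le> i" "i \<le> x1" "y0 \<le> j" "j \<le> y1" using less t by auto
      show ?thesis
      proof (cases "i = x0")
        case True
        show ?thesis
          by (rule HP_join2[OF row_hp[of x0 x1 y0] IHx[where x0'=x0 and x1'=x1 and y0'="y0 + 1" and y1'=y1 and t'=t]]) (use xl yl less.prems t True yl in auto)
      next
        case in0: False
        show ?thesis
        proof (cases "j = y0 \<or> (x1 \<ge> x0 + 2 \<and> t \<noteq> (x0 + 1, y1))")
          case True
          show ?thesis
            by (rule HP_join2[OF col_hp[of y0 y1 x0] IHy[where x0'="x0 + 1" and x1'=x1 and y0'=y0 and y1'=y1 and t'=t]]) (use xl yl less.prems t True in0 xl in auto)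
        next
          case c: False
          show ?thesis
          proof (cases "y1 \<ge> y0 + 2 \<and> t \<noteq> (x1, y0 + 1)")
            case True
            show ?thesis
              by (rule HP_join2[OF row_hp[of x0 x1 y0] IHx[where x0'=x0 and x1'=x1 and y0'="y0 + 1" and y1'=y1 and t'=t]]) (use xl yl less.prems t True c in0 yl in auto)
          next
            case d: False
            show ?thesis
            proof (cases "x1 = x0 + 1")
              case xw: True
              show ?thesis
              proof (cases "y1 = y0 + 1")
                case True
                have tt: "t = (x1, y1)" using t ti in0 c xw True by auto
                have "HP (rect x0 x1 y0 y0 \<union> rect x0 x1 y1 y1) (x0, y0) (x1, y1)"
                  by (rule HP_join[OF row_hp row_hp]) (use xw True in auto)
                moreover have "rect x0 x1 y0 y0 \<union> rect x0 x1 y1 y1 = rect x0 x1 y0 y1" using True by auto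
                ultimately show ?thesis using tt by simp
              next
                case False
                have tt: "t = (x1, y0 + 1)" using t ti in0 c d xw False yl by auto
                show ?thesis
                  by (rule HP_join2[OF row_hp[of x0 x1 y0] IH0[where x0'=x0 and x1'=x1 and y0'="y0 + 1" and y1'=y1 and t'=t]]) (use xw yl False tt yl in auto)
              qed
            next
              case xw: False
              have yw: "y1 = y0 + 1" and tt: "t = (x0 + 1, y1)" using t ti in0 c d xw xl yl by auto
              show ?thesis
                by (rule HP_join2[OF col_hp[of y0 y1 x0] IH0[where x0'="x0 + 1" and x1'=x1 and y0'=y0 and y1'=y1 and t'=t]]) (use xw xl yw tt xl in auto)
            qed
          qed
        qed
      qed
    qed
  qed
qed


lemma P2_br:
  assumes "x0 \<le> x1" "y0 \<le> y1" "t \<in> rect x0 x1 y0 y1" "t \<noteq> (x1, y0)"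
    "x0 = x1 \<Longrightarrow> t = (x1, y1)" "y0 = y1 \<Longrightarrow> t = (x0, y0)"
  shows "HP (rect x0 x1 y0 y1) (x1, y0) t"
proof -
  obtain i j where t: "t = (i, j)" by fastforce
  have "HP (rect x0 x1 y0 y1) (x0, y0) (x0 + x1 - i, j)"
    using assms t by (intro P2_bl) auto
  then have "HP {w. fxr (x0 + x1) w \<in> rect x0 x1 y0 y1} (fxr (x0 + x1) (x0, y0)) (fxr (x0 + x1) (x0 + x1 - i, j))"
    by (rule HP_fx)
  then show ?thesis using t by (simp add: fx_rect)
qed

lemma P2_tl:
  assumes "x0 \<le> x1" "y0 \<le> y1" "t \<in> rect x0 x1 y0 y1" "t \<noteq> (x0, y1)"
    "x0 = x1 \<Longrightarrow> t = (x0, y0)" "y0 = y1 \<Longrightarrow> t = (x1, y1)"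
  shows "HP (rect x0 x1 y0 y1) (x0, y1) t"
proof -
  obtain i j where t: "t = (i, j)" by fastforce
  have "HP (rect x0 x1 y0 y1) (x0, y0) (i, y0 + y1 - j)"
    using assms t by (intro P2_bl) auto
  then have "HP {w. fyr (y0 + y1) w \<in> rect x0 x1 y0 y1} (fyr (y0 + y1) (x0, y0)) (fyr (y0 + y1) (i, y0 + y1 - j))"
    by (rule HP_fy)
  then show ?thesis using t by (simp add: fy_rect)
qed

lemma P2_tr:
  assumes "x0 \<le> x1" "y0 \<le> y1" "t \<in> rect x0 x1 y0 y1" "t \<noteq> (x1, y1)"
    "x0 = x1 \<Longrightarrow> t = (x1, y0)" "y0 = y1 \<Longrightarrow> t = (x0, y1)"
  shows "HP (rect x0 x1 y0 y1) (x1, y1) t"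
proof -
  obtain i j where t: "t = (i, j)" by fastforce
  have "HP (rect x0 x1 y0 y1) (x1, y0) (i, y0 + y1 - j)"
    using assms t by (intro P2_br) auto
  then have "HP {w. fyr (y0 + y1) w \<in> rect x0 x1 y0 y1} (fyr (y0 + y1) (x1, y0)) (fyr (y0 + y1) (i, y0 + y1 - j))"
    by (rule HP_fy)
  then show ?thesis using t by (simp add: fy_rect)
qed

lemma colu: "y0 \<le> y1 \<Longrightarrow> HP (rect x x y0 y1) (x, y0) (x, y1)" by (rule col_hp)
lemma cold: "y1 \<le> y0 \<Longrightarrow> HP (rect x x y1 y0) (x, y0) (x, y1)" by (rule HP_rev[OF col_hp])
lemma rowr: "x0 \<le> x1 \<Longrightarrow> HP (rect x0 x1 y y) (x0, y) (x1, y)" by (rule row_hp)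
lemma rowl: "x1 \<le> x0 \<Longrightarrow> HP (rect x1 x0 y y) (x0, y) (x1, y)" by (rule HP_rev[OF row_hp])


definition Dsh :: "int \<Rightarrow> int \<Rightarrow> int \<Rightarrow> int \<Rightarrow> vtx set" where
  "Dsh x0 x1 y0 y1 = rect x0 x1 y0 y1 \<union> {(x1 + 1, y0)}"

lemma mem_Dsh: "(x, y) \<in> Dsh x0 x1 y0 y1 \<longleftrightarrow> (x0 \<le> x \<and> x \<le> x1 \<and> y0 \<le> y \<and> y \<le> y1) \<or> (x = x1 + 1 \<and> y = y0)"
  by (auto simp: Dsh_def)

lemma D_main:
  "(x0 \<le> x1 \<and> y0 \<le> y1 \<and> t \<in> Dsh x0 x1 y0 y1 \<and> t \<noteq> (x0, y1) \<and>
     ((x0 < x1 \<and> y0 < y1) \<or> (x0 = x1 \<and> (t = (x0, y0) \<or> t = (x1 + 1, y0))) \<or> (y0 = y1 \<and> t = (x1 + 1, y0)))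
     \<longrightarrow> HP (Dsh x0 x1 y0 y1) (x0, y1) t)
   \<and> (x0 \<le> x1 \<and> y0 < y1 \<and> t \<in> Dsh x0 x1 y0 y1 \<and> t \<noteq> (x1, y1) \<and>
     ((x0 < x1 \<and> \<not> (y1 = y0 + 1 \<and> t = (x1, y0))) \<or> (x0 = x1 \<and> (t = (x0, y0) \<or> t = (x1 + 1, y0))))
     \<longrightarrow> HP (Dsh x0 x1 y0 y1) (x1, y1) t)"
proof (induction "nat (x1 - x0 + (y1 - y0))" arbitrary: x0 x1 y0 y1 t rule: less_induct)
  case less
  note IH = less.hyps
  have IHLT: "HP (Dsh x0' x1' y0' y1') (x0', y1') t'"
    if "x1' - x0' + (y1' - y0') < x1 - x0 + (y1 - y0)" "x0' \<le> x1'" "y0' \<le> y1'" "t' \<in> Dsh x0' x1' y0' y1'" "t' \<noteq> (x0', y1')"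
      "(x0' < x1' \<and> y0' < y1') \<or> (x0' = x1' \<and> (t' = (x0', y0') \<or> t' = (x1' + 1, y0'))) \<or> (y0' = y1' \<and> t' = (x1' + 1, y0'))"
    for x0' x1' y0' y1' t'
  proof -
    have "(x0' \<le> x1' \<and> y0' \<le> y1' \<and> t' \<in> Dsh x0' x1' y0' y1' \<and> t' \<noteq> (x0', y1') \<and>
     ((x0' < x1' \<and> y0' < y1') \<or> (x0' = x1' \<and> (t' = (x0', y0') \<or> t' = (x1' + 1, y0'))) \<or> (y0' = y1' \<and> t' = (x1' + 1, y0')))
     \<longrightarrow> HP (Dsh x0' x1' y0' y1') (x0', y1') t') \<and> (x0' \<le> x1' \<and> y0' < y1' \<and> t' \<in> Dsh x0' x1' y0' y1' \<and> t' \<noteq> (x1', y1') \<and>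
     ((x0' < x1' \<and> \<not> (y1' = y0' + 1 \<and> t' = (x1', y0'))) \<or> (x0' = x1' \<and> (t' = (x0', y0') \<or> t' = (x1' + 1, y0'))))
     \<longrightarrow> HP (Dsh x0' x1' y0' y1') (x1', y1') t')"
      by (rule IH) (use that in auto)
    then show ?thesis using that by blast
  qed
  have IHRT: "HP (Dsh x0' x1' y0' y1') (x1', y1') t'"
    if "x1' - x0' + (y1' - y0') < x1 - x0 + (y1 - y0)" "x0' \<le> x1'" "y0' < y1'" "t' \<in> Dsh x0' x1' y0' y1'" "t' \<noteq> (x1', y1')"
      "(x0' < x1' \<and> \<not> (y1' = y0' + 1 \<and> t' = (x1', y0'))) \<or> (x0' = x1' \<and> (t' = (x0', y0') \<or> t' = (x1' + 1, y0')))"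
    for x0' x1' y0' y1' t'
  proof -
    have "(x0' \<le> x1' \<and> y0' \<le> y1' \<and> t' \<in> Dsh x0' x1' y0' y1' \<and> t' \<noteq> (x0', y1') \<and>
     ((x0' < x1' \<and> y0' < y1') \<or> (x0' = x1' \<and> (t' = (x0', y0') \<or> t' = (x1' + 1, y0'))) \<or> (y0' = y1' \<and> t' = (x1' + 1, y0')))
     \<longrightarrow> HP (Dsh x0' x1' y0' y1') (x0', y1') t') \<and> (x0' \<le> x1' \<and> y0' < y1' \<and> t' \<in> Dsh x0' x1' y0' y1' \<and> t' \<noteq> (x1', y1') \<and>
     ((x0' < x1' \<and> \<not> (y1' = y0' + 1 \<and> t' = (x1', y0'))) \<or> (x0' = x1' \<and> (t' = (x0', y0') \<or> t' = (x1' + 1, y0'))))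
     \<longrightarrow> HP (Dsh x0' x1' y0' y1') (x1', y1') t')"
      by (rule IH) (use that in auto)
    then show ?thesis using that by blast
  qed
  define p where "p = (x1 + 1, y0)"
  show ?case
  proof (intro conjI impI)
    assume A: "x0 \<le> x1 \<and> y0 \<le> y1 \<and> t \<in> Dsh x0 x1 y0 y1 \<and> t \<noteq> (x0, y1) \<and>
     ((x0 < x1 \<and> y0 < y1) \<or> (x0 = x1 \<and> (t = (x0, y0) \<or> t = (x1 + 1, y0))) \<or> (y0 = y1 \<and> t = (x1 + 1, y0)))"
    show "HP (Dsh x0 x1 y0 y1) (x0, y1) t"
    proof (cases "x0 = x1")
      case w1: True
      show ?thesis
      proof (cases "t = p")
        case True
        show ?thesis unfolding True
          by (rule chain2[OF cold[of y0 y1 x0] HP_single[of p]]) (use A w1 True in \<open>auto simp: p_def Dsh_def\<close>)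
      next
        case False
        then have tt: "t = (x0, y0)" "y0 < y1" using A w1 p_def by auto
        show ?thesis unfolding tt(1)
          by (rule chain3[OF cold[of "y0+1" y1 x0] HP_single[of p] HP_single[of "(x0, y0)"]])
            (use A w1 tt in \<open>auto simp: p_def Dsh_def\<close>)
      qed
    next
      case wne: False
      then have xl: "x0 < x1" using A by auto
      show ?thesis
      proof (cases "y0 = y1")
        case True
        then have tt: "t = p" using A xl p_def by auto
        show ?thesis unfolding tt
          by (rule chain2[OF rowr[of x0 x1 y1] HP_single[of p]]) (use A True tt in \<open>auto simp: p_def Dsh_def\<close>)
      next
        case False
        then have yl: "y0 < y1" using A by auto
        show ?thesis
        proof (cases "t = p")
          case True
          show ?thesis unfolding True
            by (rule chain2[OF P2_tl[of x0 x1 y0 y1 "(x1, y0)"] HP_single[of p]])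
              (use A xl yl True in \<open>auto simp: p_def Dsh_def\<close>)
        next
          case tnp: False
          obtain i j where t: "t = (i, j)" by fastforce
          have ti: "x0 \<le> i" "i \<le> x1" "y0 \<le> j" "j \<le> y1" using A tnp t by (auto simp: p_def Dsh_def)
          show ?thesis
          proof (cases "j = y1")
            case jt: True
            then have ix: "x0 < i" using A t ti by auto
            show ?thesis
            proof (cases "y1 \<ge> y0 + 2")
              case True
              show ?thesis
                by (rule chain4[OF cold[of y0 y1 x0] rowr[of "x0+1" x1 y0] HP_single[of p]
                      P2_br[of "x0+1" x1 "y0+1" y1 t]])
                  (use A xl yl True t ti jt ix in \<open>auto simp: p_def Dsh_def\<close>)
            next
              case False
              then have y1e: "y1 = y0 + 1" using yl by auto
              show ?thesis
              proof (cases "i = x0 + 1")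
                case True
                show ?thesis unfolding t jt True
                  by (rule chain4[OF cold[of y0 y1 x0] rowr[of "x0+1" x1 y0] HP_single[of p]
                      rowl[of "x0+1" x1 y1]])
                    (use A xl yl True t ti jt y1e in \<open>auto simp: p_def Dsh_def\<close>)
              next
                case False
                show ?thesis unfolding t jt
                  by (rule chain5[OF cold[of y0 y1 x0] P2_tl[of "x0+1" "i - 1" y0 y1 "(i - 1, y0)"]
                      rowr[of i x1 y0] HP_single[of p] rowl[of i x1 y1]])
                    (use A xl yl False t ti jt y1e ix in \<open>auto simp: p_def Dsh_def\<close>)
              qed
            qed
          next
            case jnt: False
            show ?thesis
            proof (cases "y1 = y0 + 1")
              case y1e: True
              then have jb: "j = y0" using ti jnt by auto
              show ?thesis
              proof (cases "i = x0")
                case True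
                show ?thesis unfolding t True jb
                  by (rule chain3[OF rowr[of x0 x1 y1] HP_single[of p] rowl[of x0 x1 y0]])
                    (use A xl y1e True t jb in \<open>auto simp: p_def Dsh_def\<close>)
              next
                case False
                have h2: "HP (Dsh (x0 + 1) x1 y0 y1) (x0 + 1, y1) t"
                  by (rule IHLT) (use A xl y1e False t ti jb in \<open>auto simp: Dsh_def\<close>)
                show ?thesis
                  by (rule chain2[OF cold[of y0 y1 x0] h2]) (use A xl y1e in \<open>auto simp: Dsh_def\<close>)
              qed
            next
              case y1g: False
              then have y2: "y1 \<ge> y0 + 2" using yl by auto
              show ?thesis
              proof (cases "t = (x1, y1 - 1)")
                case True
                show ?thesis unfolding True
                  by (rule chain5[OF rowr[of x0 x1 y1] P2_tr[of x0 "x1 - 1" y0 "y1 - 1" "(x1 - 1, y0)"]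
                      HP_single[of "(x1, y0)"] HP_single[of p] colu[of "y0+1" "y1 - 1" x1]])
                    (use A xl y2 True in \<open>auto simp: p_def Dsh_def\<close>)
              next
                case tn1: False
                show ?thesis
                proof (cases "y1 = y0 + 2 \<and> t = (x1, y0)")
                  case True
                  show ?thesis
                    by (rule chain5[OF rowr[of x0 x1 y1] P2_tr[of x0 "x1 - 1" y0 "y0 + 1" "(x1 - 1, y0)"]
                      HP_single[of "(x1, y0 + 1)"] HP_single[of p] HP_single[of t]])
                      (use A xl True in \<open>auto simp: p_def Dsh_def\<close>)
                next
                  case False
                  have h2: "HP (Dsh x0 x1 y0 (y1 - 1)) (x1, y1 - 1) t"
                    by (rule IHRT) (use A xl y2 False tn1 t ti jnt in \<open>auto simp: Dsh_def\<close>)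
                  show ?thesis
                    by (rule chain2[OF rowr[of x0 x1 y1] h2]) (use A xl y2 in \<open>auto simp: Dsh_def\<close>)
                qed
              qed
            qed
          qed
        qed
      qed
    qed
  next
    assume A: "x0 \<le> x1 \<and> y0 < y1 \<and> t \<in> Dsh x0 x1 y0 y1 \<and> t \<noteq> (x1, y1) \<and>
     ((x0 < x1 \<and> \<not> (y1 = y0 + 1 \<and> t = (x1, y0))) \<or> (x0 = x1 \<and> (t = (x0, y0) \<or> t = (x1 + 1, y0))))"
    show "HP (Dsh x0 x1 y0 y1) (x1, y1) t"
    proof (cases "x0 = x1")
      case w1: True
      show ?thesis
      proof (cases "t = p")
        case True
        show ?thesis unfolding True
          by (rule chain2[OF cold[of y0 y1 x1] HP_single[of p]]) (use A w1 True in \<open>auto simp: p_def Dsh_def\<close>)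
      next
        case False
        then have tt: "t = (x0, y0)" using A w1 p_def by auto
        show ?thesis unfolding tt
          by (rule chain3[OF cold[of "y0+1" y1 x1] HP_single[of p] HP_single[of "(x0, y0)"]])
            (use A w1 tt in \<open>auto simp: p_def Dsh_def\<close>)
      qed
    next
      case wne: False
      then have xl: "x0 < x1" using A by auto
      have yl: "y0 < y1" using A by auto
      show ?thesis
      proof (cases "t = p")
        case True
        show ?thesis unfolding True
          by (rule chain2[OF P2_tr[of x0 x1 y0 y1 "(x1, y0)"] HP_single[of p]])
            (use A xl yl True in \<open>auto simp: p_def Dsh_def\<close>)
      next
        case tnp: False
        obtain i j where t: "t = (i, j)" by fastforce
        have ti: "x0 \<le> i" "i \<le> x1" "y0 \<le> j" "j \<le> y1" using A tnp t by (auto simp: p_def Dsh_def)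
        show ?thesis
        proof (cases "i = x1")
          case ix: True
          then have y2: "y1 \<ge> y0 + 2" and jl: "j < y1" using A t ti xl by auto
          have h2: "HP (Dsh x0 x1 y0 (y1 - 1)) (x0, y1 - 1) t"
            by (rule IHLT) (use A xl y2 ix t ti jl in \<open>auto simp: Dsh_def\<close>)
          show ?thesis
            by (rule chain2[OF rowl[of x0 x1 y1] h2]) (use A xl y2 in \<open>auto simp: Dsh_def\<close>)
        next
          case inx: False
          then have il: "i < x1" using ti by auto
          show ?thesis
          proof (cases "j = y1")
            case True
            show ?thesis
              by (rule chain4[OF cold[of "y0+1" y1 x1] HP_single[of p] HP_single[of "(x1, y0)"]
                    P2_br[of x0 "x1 - 1" y0 y1 t]])
                (use A xl yl True t ti il in \<open>auto simp: p_def Dsh_def\<close>)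
          next
            case jnt: False
            show ?thesis
            proof (cases "y1 = y0 + 1")
              case True
              then have jb: "j = y0" using ti jnt by auto
              show ?thesis
                by (rule chain4[OF HP_single[of "(x1, y1)"] HP_single[of p] HP_single[of "(x1, y0)"]
                    P2_tr[of x0 "x1 - 1" y0 y1 t]])
                  (use A xl True t ti il jb in \<open>auto simp: p_def Dsh_def\<close>)
            next
              case False
              then have y2: "y1 \<ge> y0 + 2" using yl by auto
              show ?thesis
              proof (cases "t = (x0, y1 - 1)")
                case tn: False
                have h2: "HP (Dsh x0 x1 y0 (y1 - 1)) (x0, y1 - 1) t"
                  by (rule IHLT) (use A xl y2 tn t ti jnt in \<open>auto simp: Dsh_def\<close>)
                show ?thesis
                  by (rule chain2[OF rowl[of x0 x1 y1] h2]) (use A xl y2 in \<open>auto simp: Dsh_def\<close>)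
              next
                case teq: True
                show ?thesis
                proof (cases "x1 \<ge> x0 + 2")
                  case True
                  show ?thesis
                    by (rule chain4[OF cold[of "y0+1" y1 x1] HP_single[of p] HP_single[of "(x1, y0)"]
                      P2_br[of x0 "x1 - 1" y0 y1 t]])
                      (use A xl yl y2 True teq in \<open>auto simp: p_def Dsh_def\<close>)
                next
                  case False
                  then have xw: "x1 = x0 + 1" using xl by auto
                  show ?thesis unfolding teq
                    by (rule chain6[OF HP_single[of "(x1, y1)"] HP_single[of "(x0, y1)"] cold[of "y0+1" "y1 - 1" x1]
                        HP_single[of p] HP_single[of "(x1, y0)"] colu[of y0 "y1 - 1" x0]])
                      (use A xw y2 teq in \<open>auto simp: p_def Dsh_def\<close>)
                qed
              qed
            qed
          qed
        qed
      qed
    qed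
  qed
qed


lemma D_LTg:
  assumes "x0 \<le> x1" "y0 \<le> y1" "t \<in> Dsh x0 x1 y0 y1" "t \<noteq> (x0, y1)"
    "(x0 < x1 \<and> y0 < y1) \<or> (x0 = x1 \<and> (t = (x0, y0) \<or> t = (x1 + 1, y0))) \<or> (y0 = y1 \<and> t = (x1 + 1, y0))"
  shows "HP (Dsh x0 x1 y0 y1) (x0, y1) t"
  using D_main[of x0 x1 y0 y1 t] assms by blast

lemma D_LT:
  assumes "x0 < x1" "y0 < y1" "t \<in> Dsh x0 x1 y0 y1" "t \<noteq> (x0, y1)"
  shows "HP (Dsh x0 x1 y0 y1) (x0, y1) t"
  using D_main[of x0 x1 y0 y1 t] assms by auto

lemma D_RT:
  assumes "x0 < x1" "y0 < y1" "t \<in> Dsh x0 x1 y0 y1" "t \<noteq> (x1, y1)" "\<not> (y1 = y0 + 1 \<and> t = (x1, y0))"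
  shows "HP (Dsh x0 x1 y0 y1) (x1, y1) t"
  using D_main[of x0 x1 y0 y1 t] assms by auto

lemma D_LB:
  assumes "x0 \<le> x1" "y0 \<le> y1" "t \<in> Dsh x0 x1 y0 y1" "t \<noteq> (x0, y0)"
    "(x0 < x1 \<and> y0 < y1 \<and> \<not> (x1 = x0 + 1 \<and> y1 \<ge> y0 + 2 \<and> t = (x1, y0 + 1))) \<or> (x0 = x1 \<and> y0 < y1 \<and> t = (x0, y1)) \<or> (y0 = y1 \<and> t = (x1 + 1, y0))"
  shows "HP (Dsh x0 x1 y0 y1) (x0, y0) t"
proof -
  define p where "p = (x1 + 1, y0)"
  show ?thesis
  proof (cases "x0 = x1 \<and> y0 < y1")
    case True
    then have tt: "t = (x0, y1)" using assms by auto
    show ?thesis unfolding tt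
      by (rule chain3[OF HP_single[of "(x0, y0)"] HP_single[of p] colu[of "y0+1" y1 x0]]) (use True in \<open>auto simp: p_def Dsh_def\<close>)
  next
    case c1: False
    show ?thesis
    proof (cases "y0 = y1")
      case True
      then have tt: "t = p" using assms c1 p_def by (auto simp: Dsh_def)
      show ?thesis unfolding tt
        by (rule chain2[OF rowr[of x0 x1 y0] HP_single[of p]]) (use assms True in \<open>auto simp: p_def Dsh_def\<close>)
    next
      case False
      then have xl: "x0 < x1" and yl: "y0 < y1" using assms c1 by auto
      show ?thesis
      proof (cases "t = p")
        case True
        show ?thesis unfolding True
          by (rule chain2[OF P2_bl[of x0 x1 y0 y1 "(x1, y0)"] HP_single[of p]]) (use xl yl in \<open>auto simp: p_def Dsh_def\<close>)
      next
        case tnp: False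
        obtain i j where t: "t = (i, j)" by fastforce
        have ti: "x0 \<le> i" "i \<le> x1" "y0 \<le> j" "j \<le> y1" using assms tnp t by (auto simp: p_def Dsh_def)
        show ?thesis
        proof (cases "j \<noteq> y0 \<and> t \<noteq> (x1, y0 + 1) \<and> (y1 \<ge> y0 + 2 \<or> t = (x0, y0 + 1))")
          case True
          show ?thesis
            by (rule chain3[OF rowr[of x0 x1 y0] HP_single[of p] P2_br[of x0 x1 "y0+1" y1 t]])
              (use xl yl True t ti in \<open>auto simp: p_def Dsh_def\<close>)
        next
          case c2: False
          show ?thesis
          proof (cases "y1 = y0 + 1 \<and> t = (x0 + 1, y0 + 1)")
            case True
            show ?thesis unfolding True[THEN conjunct2]
              by (rule chain5[OF HP_single[of "(x0, y0)"] HP_single[of "(x0, y0+1)"] rowr[of "x0+1" x1 y0] HP_single[of p] rowl[of "x0+1" x1 "y0+1"]])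
                (use xl True in \<open>auto simp: p_def Dsh_def\<close>)
          next
            case c3: False
            have h2: "HP (Dsh (x0 + 1) x1 y0 y1) (x0 + 1, y1) t"
              by (rule D_LTg) (use assms xl yl c2 c3 t ti in \<open>auto simp: Dsh_def\<close>)
            show ?thesis
              by (rule chain2[OF colu[of y0 y1 x0] h2]) (use xl yl in \<open>auto simp: Dsh_def\<close>)
          qed
        qed
      qed
    qed
  qed
qed

definition TDsh :: "int \<Rightarrow> int \<Rightarrow> int \<Rightarrow> int \<Rightarrow> vtx set" where
  "TDsh x0 x1 y0 y1 = rect x0 x1 y0 y1 \<union> {(x1 + 1, y1)}"

lemma fy_Dsh: "{w. fyr (y0 + y1) w \<in> Dsh x0 x1 y0 y1} = TDsh x0 x1 y0 y1"
  by (auto simp: Dsh_def TDsh_def fyr_def)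

lemma TD_refl:
  assumes "HP (Dsh x0 x1 y0 y1) s' t'" "s = fyr (y0 + y1) s'" "t = fyr (y0 + y1) t'"
  shows "HP (TDsh x0 x1 y0 y1) s t"
  using HP_fy[OF assms(1), of "y0 + y1"] assms(2,3) by (simp add: fy_Dsh)

lemma TD_LB:
  assumes "x0 < x1" "y0 < y1" "t \<in> TDsh x0 x1 y0 y1" "t \<noteq> (x0, y0)"
  shows "HP (TDsh x0 x1 y0 y1) (x0, y0) t"
proof -
  obtain i j where t: "t = (i, j)" by fastforce
  have "HP (Dsh x0 x1 y0 y1) (x0, y1) (i, y0 + y1 - j)"
    by (rule D_LT) (use assms t in \<open>auto simp: Dsh_def TDsh_def\<close>)
  then show ?thesis by (rule TD_refl) (use t in auto)
qed

lemma TD_RB: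
  assumes "x0 < x1" "y0 < y1" "t \<in> TDsh x0 x1 y0 y1" "t \<noteq> (x1, y0)" "\<not> (y1 = y0 + 1 \<and> t = (x1, y1))"
  shows "HP (TDsh x0 x1 y0 y1) (x1, y0) t"
proof -
  obtain i j where t: "t = (i, j)" by fastforce
  have "HP (Dsh x0 x1 y0 y1) (x1, y1) (i, y0 + y1 - j)"
    by (rule D_RT) (use assms t in \<open>auto simp: Dsh_def TDsh_def\<close>)
  then show ?thesis by (rule TD_refl) (use t in auto)
qed

lemma TD_LT:
  assumes "x0 \<le> x1" "y0 \<le> y1" "t \<in> TDsh x0 x1 y0 y1" "t \<noteq> (x0, y1)"
    "(x0 < x1 \<and> y0 < y1 \<and> \<not> (x1 = x0 + 1 \<and> y1 \<ge> y0 + 2 \<and> t = (x1, y1 - 1))) \<or> (x0 = x1 \<and> y0 < y1 \<and> t = (x0, y0)) \<or> (y0 = y1 \<and> t = (x1 + 1, y1))"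
  shows "HP (TDsh x0 x1 y0 y1) (x0, y1) t"
proof -
  obtain i j where t: "t = (i, j)" by fastforce
  have "HP (Dsh x0 x1 y0 y1) (x0, y0) (i, y0 + y1 - j)"
    by (rule D_LB) (use assms t in \<open>auto simp: Dsh_def TDsh_def\<close>)
  then show ?thesis by (rule TD_refl) (use t in auto)
qed


definition Csh :: "int \<Rightarrow> int \<Rightarrow> int \<Rightarrow> vtx set" where
  "Csh x0 a n = rect x0 a 1 n \<union> {(a + 1, 1), (a + 1, n)}"

lemma fy_Csh: "{w. fyr (n + 1) w \<in> Csh x0 a n} = Csh x0 a n"
  by (auto simp: Csh_def fyr_def)

lemma C_refl:
  assumes "HP (Csh x0 a n) s' t'" "s = fyr (n + 1) s'" "t = fyr (n + 1) t'"
  shows "HP (Csh x0 a n) s t"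
  using HP_fy[OF assms(1), of "n + 1"] assms(2,3) by (simp add: fy_Csh)

lemma CC:
  assumes "x0 \<le> a" "3 \<le> n"
  shows "HP (Csh x0 a n) (x0, 1) (x0, n)"
proof (cases "n \<ge> 4")
  case True
  show ?thesis
    by (rule chain5[OF rowr[of x0 a 1] HP_single[of "(a+1,1)"] P2_br[of x0 a 2 "n - 1" "(a, n - 1)"]
          HP_single[of "(a+1,n)"] rowl[of x0 a n]]) (use assms True in \<open>auto simp: Csh_def\<close>)
next
  case False
  then have n3: "n = 3" using assms by auto
  show ?thesis
  proof (cases "x0 = a")
    case True
    show ?thesis unfolding n3 True
      by (rule chain5[OF HP_single[of "(a,1)"] HP_single[of "(a+1,1)"] HP_single[of "(a,2)"] HP_single[of "(a+1,3)"] HP_single[of "(a,3)"]])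
        (auto simp: Csh_def)
  next
    case False
    show ?thesis unfolding n3
      by (rule chain6[OF P2_bl[of x0 "a - 1" 1 2 "(a - 1, 2)"] HP_single[of "(a,1)"] HP_single[of "(a+1,1)"] HP_single[of "(a,2)"]
          HP_single[of "(a+1,3)"] rowl[of x0 a 3]]) (use assms False in \<open>auto simp: Csh_def\<close>)
  qed
qed

lemma CSLa:
  assumes "x0 \<le> a" "3 \<le> n" "1 \<le> j" "j < n" "x0 < a \<or> j = 1"
  shows "HP (Csh x0 a n) (x0, n) (x0, j)"
proof (cases "j = 1")
  case True
  show ?thesis unfolding True
    by (rule chain3[OF TD_LT[of x0 a 2 n "(a, 2)"] HP_single[of "(a+1,1)"] rowl[of x0 a 1]])
      (use assms in \<open>auto simp: Csh_def TDsh_def\<close>)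
next
  case j1: False
  then have xl: "x0 < a" using assms by auto
  show ?thesis
  proof (cases "j \<le> n - 2")
    case True
    show ?thesis
      by (rule chain2[OF TD_LT[of x0 a "j+1" n "(a, j+1)"] D_RT[of x0 a 1 j "(x0, j)"]])
        (use assms j1 xl True in \<open>auto simp: Csh_def TDsh_def Dsh_def\<close>)
  next
    case False
    then have jn: "j = n - 1" using assms by auto
    show ?thesis unfolding jn
      by (rule chain3[OF rowr[of x0 a n] HP_single[of "(a+1,n)"] D_RT[of x0 a 1 "n - 1" "(x0, n - 1)"]])
        (use assms j1 xl jn in \<open>auto simp: Csh_def Dsh_def\<close>)
  qed
qed

lemma CSLb:
  assumes "x0 \<le> a" "3 \<le> n" "1 < j" "j \<le> n" "x0 < a \<or> j = n"
  shows "HP (Csh x0 a n) (x0, 1) (x0, j)"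
proof -
  have "HP (Csh x0 a n) (x0, n) (x0, n + 1 - j)"
    by (rule CSLa) (use assms in auto)
  then show ?thesis by (rule C_refl) auto
qed

lemma HPp:
  assumes "2 \<le> a" "3 \<le> n" "s \<in> rect 1 a 1 n"
  shows "HP (Csh 1 a n) s (a + 1, 1)"
proof -
  obtain x y where s: "s = (x, y)" by fastforce
  have sr: "1 \<le> x" "x \<le> a" "1 \<le> y" "y \<le> n" using assms s by auto
  show ?thesis
  proof (cases "x < a")
    case xa: True
    show ?thesis
    proof (cases "a \<ge> 3")
      case a3: True
      show ?thesis
      proof (cases "s = (a - 1, n)")
        case False
        show ?thesis
          by (rule chain5[OF HP_rev[OF P2_tr[of 1 "a - 1" 1 n s]] HP_single[of "(a, n)"] HP_single[of "(a+1, n)"]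
              cold[of 1 "n - 1" a] HP_single[of "(a+1, 1)"]]) (use assms a3 False s sr xa in \<open>auto simp: Csh_def\<close>)
      next
        case True
        show ?thesis unfolding True
          by (rule chain5[OF P2_tr[of 1 "a - 1" 1 n "(a - 1, n - 1)"] HP_single[of "(a, n)"] HP_single[of "(a+1, n)"]
              cold[of 1 "n - 1" a] HP_single[of "(a+1, 1)"]]) (use assms a3 True in \<open>auto simp: Csh_def\<close>)
      qed
    next
      case False
      then have a2: "a = 2" and x1: "x = 1" using assms xa sr by auto
      show ?thesis
      proof (cases "y = n")
        case True
        show ?thesis unfolding s x1 True a2
          by (rule chain7[OF HP_single[of "(1, n)"] HP_single[of "(2, n)"] HP_single[of "(2+1, n)"] HP_single[of "(2, n - 1)"]
              HP_single[of "(1, n - 1)"] P2_tl[of 1 2 1 "n - 2" "(2, 1)"] HP_single[of "(2+1, 1)"]]) (use assms in \<open>auto simp: Csh_def\<close>)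
      next
        case yn: False
        show ?thesis
        proof (cases "y = 1")
          case True
          show ?thesis unfolding s x1 True a2
            by (rule chain5[OF colu[of 1 n 1] HP_single[of "(2, n)"] HP_single[of "(2+1, n)"] cold[of 1 "n - 1" 2] HP_single[of "(2+1, 1)"]])
              (use assms in \<open>auto simp: Csh_def\<close>)
        next
          case False
          show ?thesis unfolding s x1 a2
            by (rule chain6[OF colu[of y n 1] HP_single[of "(2, n)"] HP_single[of "(2+1, n)"] cold[of y "n - 1" 2]
                P2_tl[of 1 2 1 "y - 1" "(2, 1)"] HP_single[of "(2+1, 1)"]]) (use assms sr yn False in \<open>auto simp: Csh_def\<close>)
        qed
      qed
    qed
  next
    case False
    then have xa: "x = a" using sr by auto
    show ?thesis
    proof (cases "y = 1")
      case True
      show ?thesis unfolding s xa True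
        by (rule chain6[OF rowl[of 1 a 1] P2_bl[of 1 "a - 1" 2 n "(a - 1, n)"] HP_single[of "(a, n)"] HP_single[of "(a+1, n)"]
            cold[of 2 "n - 1" a] HP_single[of "(a+1, 1)"]]) (use assms in \<open>auto simp: Csh_def\<close>)
    next
      case y1: False
      show ?thesis
      proof (cases "y = n")
        case False
        show ?thesis unfolding s xa
          by (rule chain6[OF colu[of y "n - 1" a] HP_single[of "(a+1, n)"] HP_single[of "(a, n)"]
              P2_tr[of 1 "a - 1" y n "(1, y)"] P2_tl[of 1 a 1 "y - 1" "(a, 1)"] HP_single[of "(a+1, 1)"]])
            (use assms sr y1 False in \<open>auto simp: Csh_def\<close>)
      next
        case True
        show ?thesis unfolding s xa True
          by (rule chain6[OF HP_single[of "(a, n)"] HP_single[of "(a+1, n)"] HP_single[of "(a, n - 1)"]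
              P2_tr[of 1 "a - 1" "n - 1" n "(1, n - 1)"] P2_tl[of 1 a 1 "n - 2" "(a, 1)"] HP_single[of "(a+1, 1)"]])
            (use assms in \<open>auto simp: Csh_def\<close>)
      qed
    qed
  qed
qed


lemma VL1:
  assumes "3 \<le> n" "s \<in> rect 1 (u - 1) 1 n" "2 \<le> u" "u \<le> a" "1 \<le> v" "v < n" "s \<noteq> (u - 1, n)"
    "u = 2 \<Longrightarrow> s = (1, 1)" "u < a \<or> v = 1"
  shows "HP (Csh 1 a n) s (u, v)"
  by (rule chain2[OF HP_rev[OF P2_tr[of 1 "u - 1" 1 n s]] CSLa[of u a n v]]) (use assms in \<open>auto simp: Csh_def\<close>)

lemma VL2:
  assumes "3 \<le> n" "s \<in> rect 1 (u - 1) 1 n" "2 \<le> u" "u \<le> a" "1 < v" "v \<le> n" "s \<noteq> (u - 1, 1)"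
    "u = 2 \<Longrightarrow> s = (1, n)" "u < a \<or> v = n"
  shows "HP (Csh 1 a n) s (u, v)"
  by (rule chain2[OF HP_rev[OF P2_br[of 1 "u - 1" 1 n s]] CSLb[of u a n v]]) (use assms in \<open>auto simp: Csh_def\<close>)

lemma VL2c:
  assumes "3 \<le> n" "3 \<le> u" "u \<le> a" "1 < v" "v \<le> n" "u < a \<or> v = n"
  shows "HP (Csh 1 a n) (u - 1, 1) (u, v)"
  by (rule chain2[OF P2_br[of 1 "u - 1" 1 n "(u - 1, 2)"] CSLb[of u a n v]]) (use assms in \<open>auto simp: Csh_def\<close>)

lemma Hp:
  assumes "2 \<le> a" "3 \<le> n" "t \<in> TDsh 1 a 2 n" "t \<noteq> (a, 2)" "\<not> (n = 3 \<and> t = (a, n))"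
  shows "HP (Csh 1 a n) (1, 1) t"
  by (rule chain3[OF rowr[of 1 a 1] HP_single[of "(a+1, 1)"] TD_RB[of 1 a 2 n t]])
    (use assms in \<open>auto simp: Csh_def TDsh_def\<close>)

lemma HLL:
  assumes "2 \<le> a" "2 \<le> h" "h + 2 \<le> n" "s \<in> rect 1 a 1 h" "s \<noteq> (1, h)" "t \<in> rect 1 a (h + 1) n" "t \<noteq> (1, h + 1)"
  shows "HP (Csh 1 a n) s t"
  by (rule chain2[OF HP_rev[OF D_LT[of 1 a 1 h s]] TD_LB[of 1 a "h + 1" n t]])
    (use assms in \<open>auto simp: Csh_def TDsh_def Dsh_def\<close>)

lemma HRR:
  assumes "2 \<le> a" "2 \<le> h" "h + 2 \<le> n" "s \<in> rect 1 a 1 h" "s \<noteq> (a, h)" "\<not> (h = 2 \<and> s = (a, 1))"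
    "t \<in> rect 1 a (h + 1) n" "t \<noteq> (a, h + 1)" "\<not> (n = h + 2 \<and> t = (a, n))"
  shows "HP (Csh 1 a n) s t"
  by (rule chain2[OF HP_rev[OF D_RT[of 1 a 1 h s]] TD_RB[of 1 a "h + 1" n t]])
    (use assms in \<open>auto simp: Csh_def TDsh_def Dsh_def\<close>)

lemma ALPHA:
  assumes "3 \<le> a" "4 \<le> n" "1 \<le> x" "x \<le> a - 1"
  shows "HP (Csh 1 a n) (x, 1) (a, 2)"
proof (cases "x = 1")
  case True
  show ?thesis unfolding True
    by (rule chain7[OF HP_single[of "(1,1)"] HP_single[of "(1,2)"] TD_LB[of 1 a 3 n "(2, 3)"] P2_tl[of 2 "a - 1" 1 2 "(a - 1, 1)"]
        HP_single[of "(a,1)"] HP_single[of "(a+1,1)"] HP_single[of "(a,2)"]]) (use assms in \<open>auto simp: Csh_def TDsh_def\<close>)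
next
  case x1: False
  show ?thesis
  proof (cases "x = a - 1")
    case True
    show ?thesis unfolding True
      by (rule chain7[OF rowl[of 1 "a - 1" 1] HP_single[of "(1,2)"] TD_LB[of 1 a 3 n "(2, 3)"] rowr[of 2 "a - 1" 2]
        HP_single[of "(a,1)"] HP_single[of "(a+1,1)"] HP_single[of "(a,2)"]]) (use assms in \<open>auto simp: Csh_def TDsh_def\<close>)
  next
    case False
    show ?thesis
      by (rule chain8[OF rowl[of 1 x 1] HP_single[of "(1,2)"] TD_LB[of 1 a 3 n "(2, 3)"] rowr[of 2 x 2]
        P2_tl[of "x + 1" "a - 1" 1 2 "(a - 1, 1)"] HP_single[of "(a,1)"] HP_single[of "(a+1,1)"] HP_single[of "(a,2)"]])
        (use assms x1 False in \<open>auto simp: Csh_def TDsh_def\<close>)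
  qed
qed

lemma BETA1:
  assumes "1 \<le> x" "x \<le> a - 1"
  shows "HP (Csh 1 a 3) (x, 1) (x, 3)"
proof (cases "x = 1")
  case True
  show ?thesis unfolding True
    by (rule chain4[OF HP_single[of "(1,1)"] CC[of 2 a 3] HP_single[of "(1,2)"] HP_single[of "(1,3)"]])
      (use assms in \<open>auto simp: Csh_def\<close>)
next
  case False
  show ?thesis
    by (rule chain5[OF HP_single[of "(x,1)"] CC[of "x + 1" a 3] HP_single[of "(x,2)"] P2_br[of 1 "x - 1" 1 3 "(x - 1, 3)"] HP_single[of "(x,3)"]])
      (use assms False in \<open>auto simp: Csh_def\<close>)
qed

lemma LOOPi:
  assumes "3 \<le> n" "1 \<le> x" "x \<le> a - 1"
  shows "HP (Csh 1 a n) (x, 1) (x, 2)"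
proof (cases "x = 1")
  case True
  show ?thesis unfolding True
    by (rule chain4[OF HP_single[of "(1,1)"] CC[of 2 a n] cold[of 3 n 1] HP_single[of "(1,2)"]])
      (use assms in \<open>auto simp: Csh_def\<close>)
next
  case False
  show ?thesis
    by (rule chain5[OF HP_single[of "(x,1)"] CC[of "x + 1" a n] P2_tr[of 1 x 3 n "(1, 3)"] P2_tl[of 1 "x - 1" 1 2 "(x - 1, 1)"] HP_single[of "(x,2)"]])
      (use assms False in \<open>auto simp: Csh_def\<close>)
qed

lemma LOOPii:
  assumes "3 \<le> a" "2 \<le> j" "j \<le> n - 1"
  shows "HP (Csh 1 a n) (1, j) (2, j)"
  by (rule chain5[OF HP_single[of "(1,j)"] P2_tl[of 1 2 1 "j - 1" "(2, 1)"] CC[of 3 a n] P2_tr[of 1 2 "j + 1" n "(1, j + 1)"] HP_single[of "(2,j)"]])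
    (use assms in \<open>auto simp: Csh_def\<close>)

lemma LOOPiii:
  assumes "3 \<le> a" "3 \<le> n"
  shows "HP (Csh 1 a n) (1, 2) (2, 1)"
  by (rule chain6[OF HP_single[of "(1,2)"] HP_single[of "(1,1)"] HP_single[of "(2,2)"] P2_bl[of 1 2 3 n "(2, n)"] HP_rev[OF CC[of 3 a n]] HP_single[of "(2,1)"]])
    (use assms in \<open>auto simp: Csh_def\<close>)


lemma COLAlow:
  assumes "2 \<le> a" "3 \<le> j" "j \<le> n - 1" "s \<in> rect 1 (a - 1) 1 (j - 1)"
    "s \<noteq> (a - 1, 1) \<Longrightarrow> a = 2 \<Longrightarrow> s = (1, j - 1)"
    "s = (a - 1, 1) \<Longrightarrow> a = 2 \<Longrightarrow> j = 3"
  shows "HP (Csh 1 a n) s (a, j)"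
proof (cases "s = (a - 1, 1)")
  case False
  show ?thesis
    apply (rule chain8[OF HP_rev[OF P2_br[of 1 "a - 1" 1 "j - 1" s]] HP_single[of "(a,1)"] HP_single[of "(a+1,1)"] colu[of 2 "j - 1" a]
        P2_br[of 1 "a - 1" j n "(a - 1, n)"] HP_single[of "(a,n)"] HP_single[of "(a+1,n)"] cold[of j "n - 1" a]])

    using assms False apply (simp_all add: set_eq_iff disjoint_iff Csh_def split_paired_all split_paired_All split_paired_Ex split: if_splits)
    by ((smt (verit))+)?
next
  case True
  show ?thesis unfolding True
    apply (rule chain8[OF P2_br[of 1 "a - 1" 1 "j - 1" "(a - 1, 2)"] HP_single[of "(a,1)"] HP_single[of "(a+1,1)"] colu[of 2 "j - 1" a]
        P2_br[of 1 "a - 1" j n "(a - 1, n)"] HP_single[of "(a,n)"] HP_single[of "(a+1,n)"] cold[of j "n - 1" a]])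

    using assms True apply (simp_all add: set_eq_iff disjoint_iff Csh_def split_paired_all split_paired_All split_paired_Ex split: if_splits)
    by ((smt (verit))+)?
qed

lemma COLAlowA2:
  assumes "3 \<le> v" "v \<le> n - 1"
  shows "HP (Csh 1 2 n) (1, 1) (2, v)"
proof (cases "v = 3")
  case True
  show ?thesis unfolding True
    apply (rule chain9[OF HP_single[of "(1,1)"] HP_single[of "(1,2)"] HP_single[of "(2,1)"] HP_single[of "(2+1,1)"] HP_single[of "(2,2)"]
        colu[of 3 n 1] HP_single[of "(2,n)"] HP_single[of "(2+1,n)"] cold[of 3 "n - 1" 2]])

    using assms True apply (simp_all add: set_eq_iff disjoint_iff Csh_def split_paired_all split_paired_All split_paired_Ex split: if_splits)
    by ((smt (verit))+)?
next
  case False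
  show ?thesis
    apply (rule chain10[OF HP_single[of "(1,1)"] HP_single[of "(1,2)"] HP_single[of "(2,1)"] HP_single[of "(2+1,1)"] HP_single[of "(2,2)"]
        P2_br[of 1 2 3 "v - 1" "(1, v - 1)"] colu[of v n 1] HP_single[of "(2,n)"] HP_single[of "(2+1,n)"] cold[of v "n - 1" 2]])

    using assms False apply (simp_all add: set_eq_iff disjoint_iff Csh_def split_paired_all split_paired_All split_paired_Ex split: if_splits)
    by ((smt (verit))+)?
qed

lemma S2a:
  assumes "3 \<le> a" "3 \<le> j" "j \<le> n - 2"
  shows "HP (Csh 1 a n) (a - 1, j) (a, j)"
  apply (rule chain10[OF HP_single[of "(a - 1, j)"] colu[of "j + 1" "n - 1" a] HP_single[of "(a+1,n)"] HP_single[of "(a,n)"]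
      P2_tr[of 1 "a - 1" "j + 1" n "(1, j + 1)"] rowr[of 1 "a - 2" j] P2_tr[of 1 "a - 1" 1 "j - 1" "(a - 1, 1)"]
      HP_single[of "(a,1)"] HP_single[of "(a+1,1)"] colu[of 2 j a]])

  using assms apply (simp_all add: set_eq_iff disjoint_iff Csh_def split_paired_all split_paired_All split_paired_Ex split: if_splits)
  by ((smt (verit))+)?

lemma S2b:
  assumes "3 \<le> a" "4 \<le> n"
  shows "HP (Csh 1 a n) (a - 1, 2) (a, 2)"
  apply (rule chain10[OF HP_single[of "(a - 1, 2)"] colu[of 3 "n - 1" a] HP_single[of "(a+1,n)"] HP_single[of "(a,n)"]
      P2_tr[of 1 "a - 1" 3 n "(1, 3)"] P2_tl[of 1 "a - 2" 1 2 "(a - 2, 1)"] HP_single[of "(a - 1,1)"]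
      HP_single[of "(a,1)"] HP_single[of "(a+1,1)"] HP_single[of "(a,2)"]])

  using assms apply (simp_all add: set_eq_iff disjoint_iff Csh_def split_paired_all split_paired_All split_paired_Ex split: if_splits)
  by ((smt (verit))+)?

lemma COLAG:
  assumes "3 \<le> a" "1 \<le> x" "x \<le> a - 2" "2 \<le> j" "j \<le> n - 2" "j \<ge> 3 \<or> x = 1"
    "u = (if j \<ge> 3 then (x + 1, j - 1) else (1, 1))"
  shows "HP (Csh 1 a n) (x, j) (a, j)"
  apply (rule chain10[OF rowl[of 1 x j] P2_bl[of 1 "a - 1" "j + 1" n "(a - 1, n)"] HP_single[of "(a,n)"] HP_single[of "(a+1,n)"]
      cold[of "j + 1" "n - 1" a] rowl[of "x + 1" "a - 1" j] HP_rev[OF P2_br[of 1 "a - 1" 1 "j - 1" u]]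
      HP_single[of "(a,1)"] HP_single[of "(a+1,1)"] colu[of 2 j a]])

  using assms apply (simp_all add: set_eq_iff disjoint_iff Csh_def  split_paired_all split_paired_All split_paired_Ex split: if_splits)
  by ((smt (verit))+)?

lemma COLAZ:
  assumes "4 \<le> n" "2 \<le> x" "x \<le> a - 2"
  shows "HP (Csh 1 a n) (x, 2) (a, 2)"
  apply (rule chain9[OF P2_tr[of 1 x 1 2 "(1, 2)"] P2_bl[of 1 "a - 1" 3 n "(a - 1, n)"] HP_single[of "(a,n)"] HP_single[of "(a+1,n)"]
      cold[of 3 "n - 1" a] P2_tr[of "x + 1" "a - 1" 1 2 "(a - 1, 1)"] HP_single[of "(a,1)"] HP_single[of "(a+1,1)"] HP_single[of "(a,2)"]])

  using assms apply (simp_all add: set_eq_iff disjoint_iff Csh_def split_paired_all split_paired_All split_paired_Ex split: if_splits)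
  by ((smt (verit))+)?

lemma A2TOP:
  assumes "4 \<le> n"
  shows "HP (Csh 1 2 n) (1, n - 2) (2, n)"
  apply (rule chain9[OF cold[of 1 "n - 2" 1] HP_single[of "(2,1)"] HP_single[of "(2+1,1)"] colu[of 2 "n - 2" 2]
      HP_single[of "(1, n - 1)"] HP_single[of "(1, n)"] HP_single[of "(2, n - 1)"] HP_single[of "(2+1, n)"] HP_single[of "(2, n)"]])

  using assms apply (simp_all add: set_eq_iff disjoint_iff Csh_def split_paired_all split_paired_All split_paired_Ex split: if_splits)
  by ((smt (verit))+)?


lemma mainB:
  assumes a2: "2 \<le> a" and n3: "3 \<le> n"
    and sr: "1 \<le> x" "x \<le> a" "1 \<le> y" "y \<le> n" and tr: "1 \<le> u" "u \<le> a" "1 \<le> v" "v \<le> n"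
    and ne: "x \<noteq> u \<or> y \<noteq> v" and xu: "x \<le> u" and yv: "y \<le> v"
    and E1: "\<not> (x = a \<and> u = a \<and> y = 1 \<and> v = 2)"
    and E2: "\<not> (x = a \<and> u = a \<and> y = n - 1 \<and> v = n)"
    and E3: "\<not> (a = 2 \<and> y = v \<and> 2 \<le> y \<and> y \<le> n - 1 \<and> x \<noteq> u)"
    and E4: "\<not> (a = 2 \<and> x = 1 \<and> u = 2 \<and> ((y = 1 \<and> v = 2) \<or> (y = n - 1 \<and> v = n)))"
    and E5: "\<not> (n = 3 \<and> ((x = a \<and> u = a \<and> y = 1 \<and> v = 3) \<or> (a = 2 \<and> x = 1 \<and> u = 2 \<and> y = 1 \<and> v = 3) \<or> (a > 2 \<and> x < a \<and> u = a \<and> v = 2)))"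
  shows "HP (Csh 1 a n) (x, y) (u, v)"
proof (cases "x < u")
  case xlu: True
  show ?thesis
  proof (cases "u \<le> a - 1 \<or> v = 1 \<or> v = n")
    case c1: True
    show ?thesis
    proof (cases "u \<ge> 3")
      case u3: True
      show ?thesis
      proof (cases "v < n")
        case True
        show ?thesis by (rule VL1) (use assms xlu c1 u3 True in auto)
      next
        case vn: False
        show ?thesis
        proof (cases "(x, y) = (u - 1, 1)")
          case False
          show ?thesis by (rule VL2) (use assms xlu c1 u3 vn False in auto)
        next
          case True
          have "HP (Csh 1 a n) (u - 1, 1) (u, v)" by (rule VL2c) (use assms xlu c1 u3 vn in auto)
          then show ?thesis using True by simp
        qed
      qed
    next
      case False
      then have u2: "u = 2" and x1: "x = 1" using xlu sr by auto
      show ?thesis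
      proof (cases "y = 1")
        case y1: True
        show ?thesis
        proof (cases "v < n")
          case True
          show ?thesis by (rule VL1) (use assms u2 x1 y1 c1 True in auto)
        next
          case False
          then have vn: "v = n" using tr by auto
          have "HP (Csh 1 a n) (1, 1) (u, v)" by (rule Hp) (use assms u2 vn x1 y1 in \<open>auto simp: TDsh_def\<close>)
          then show ?thesis using x1 y1 by simp
        qed
      next
        case yn1: False
        show ?thesis
        proof (cases "y = n")
          case True
          show ?thesis by (rule VL2) (use assms u2 x1 True in auto)
        next
          case ynn: False
          show ?thesis
          proof (cases "v = y")
            case True
            have "HP (Csh 1 a n) (1, y) (2, y)" by (rule LOOPii) (use assms u2 x1 yn1 ynn True c1 in auto)
            then show ?thesis using x1 u2 True by simp
          next
            case vy: False
            show ?thesis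
            proof (cases "y \<le> n - 2 \<and> \<not> (a = 2 \<and> v = y + 1) \<and> \<not> (a = 2 \<and> y = n - 2 \<and> v = n)")
              case True
              show ?thesis by (rule HRR[of a y]) (use assms u2 x1 yn1 ynn vy True in auto)
            next
              case h1: False
              show ?thesis
              proof (cases "y + 1 < v \<and> v \<le> n - 1")
                case True
                show ?thesis by (rule HLL[of a "v - 1"]) (use assms u2 x1 yn1 ynn vy True in auto)
              next
                case h2: False
                show ?thesis
                proof (cases "y = n - 1")
                  case True
                  then have vn: "v = n" using yv tr ynn vy by auto
                  have a3: "3 \<le> a" using E4 x1 u2 True vn a2 by auto
                  have "HP (Csh 1 a n) (1, 2) (2, 1)" by (rule LOOPiii) (use a3 n3 in auto)
                  then have "HP (Csh 1 a n) (1, n + 1 - 2) (2, n + 1 - 1)" by (rule C_refl) auto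
                  then show ?thesis using x1 u2 True vn by simp
                next
                  case False
                  then have a2': "a = 2" and yy: "y = n - 2" and vn: "v = n" and n4: "n \<ge> 4"
                    using h1 h2 yv vy ynn c1 u2 tr sr yn1 by auto
                  have "HP (Csh 1 2 n) (1, n - 2) (2, n)" by (rule A2TOP) (use n4 in auto)
                  then show ?thesis using x1 u2 a2' yy vn by simp
                qed
              qed
            qed
          qed
        qed
      qed
    qed
  next
    case c2: False
    then have ua: "u = a" and v2: "2 \<le> v" "v \<le> n - 1" using tr by auto
    show ?thesis
    proof (cases "y < v")
      case ylv: True
      show ?thesis
      proof (cases "y = 1 \<and> v = 2")
        case True
        have a3: "3 \<le> a" using E4 True ua xlu sr by auto
        have n4: "4 \<le> n" using E5 True ua xlu a3 n3 by auto
        have "HP (Csh 1 a n) (x, 1) (a, 2)" by (rule ALPHA) (use a3 n4 sr xlu ua in auto)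
        then show ?thesis using True ua by simp
      next
        case na: False
        show ?thesis
        proof (cases "a = 2")
          case a2': True
          show ?thesis
          proof (cases "(x, y) = (1, 1)")
            case True
            have "HP (Csh 1 2 n) (1, 1) (2, v)" by (rule COLAlowA2) (use na True v2 in auto)
            then show ?thesis using True a2' ua by simp
          next
            case sn: False
            then have x1: "x = 1" and y2: "y \<ge> 2" using xlu ua a2' sr by auto
            show ?thesis
            proof (cases "y = v - 1")
              case True
              show ?thesis unfolding ua by (rule COLAlow) (use a2' x1 y2 True v2 in auto)
            next
              case False
              show ?thesis by (rule HRR[of a y]) (use a2' x1 y2 False v2 ylv ua in auto)
            qed
          qed
        next
          case False
          show ?thesis unfolding ua by (rule COLAlow) (use False a2 na ylv v2 xlu ua sr in auto)
        qed
      qed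
    next
      case False
      then have yv': "y = v" using yv by auto
      have key: "HP (Csh 1 a n) (x, j) (a, j)"
        if "2 \<le> j" "j \<le> n - 2" "x \<le> a - 1" "1 \<le> x" "3 \<le> a" "j = 2 \<Longrightarrow> 4 \<le> n" for j
      proof (cases "x = a - 1")
        case True
        show ?thesis
        proof (cases "j \<ge> 3")
          case True
          have "HP (Csh 1 a n) (a - 1, j) (a, j)" by (rule S2a) (use that True in auto)
          then show ?thesis using \<open>x = a - 1\<close> by simp
        next
          case False
          have "HP (Csh 1 a n) (a - 1, 2) (a, 2)" by (rule S2b) (use that False in auto)
          moreover have "j = 2" using False that by auto
          ultimately show ?thesis using \<open>x = a - 1\<close> by simp
        qed
      next
        case xa: False
        show ?thesis
        proof (cases "j \<ge> 3 \<or> x = 1")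
          case True
          show ?thesis by (rule COLAG[where u="if j \<ge> 3 then (x + 1, j - 1) else (1, 1)"]) (use that xa True in auto)
        next
          case False
          then have j2: "j = 2" using that by auto
          have "HP (Csh 1 a n) (x, 2) (a, 2)" by (rule COLAZ) (use that xa False j2 in auto)
          then show ?thesis using j2 by simp
        qed
      qed
      have a3: "3 \<le> a" using E3 yv' v2 xlu ua a2 by auto
      have nv: "\<not> (n = 3 \<and> v = 2)" using E5 a3 xlu ua by auto
      show ?thesis
      proof (cases "v = n - 1 \<and> n \<ge> 4")
        case True
        have "HP (Csh 1 a n) (x, 2) (a, 2)" by (rule key) (use True a3 xlu ua sr in auto)
        then have "HP (Csh 1 a n) (x, n + 1 - 2) (a, n + 1 - 2)" by (rule C_refl) auto
        then show ?thesis using True yv' ua by simp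
      next
        case False
        have "HP (Csh 1 a n) (x, v) (a, v)" by (rule key) (use False nv v2 a3 xlu ua sr in auto)
        then show ?thesis using yv' ua by simp
      qed
    qed
  qed
next
  case False
  then have xu': "x = u" using xu by auto
  then have ylv: "y < v" using ne yv by auto
  show ?thesis
  proof (cases "2 \<le> y \<and> y \<le> n - 2")
    case True
    show ?thesis
    proof (cases "x = 1")
      case False
      show ?thesis by (rule HLL[of a y]) (use assms xu' ylv True False in auto)
    next
      case x1: True
      show ?thesis by (rule HRR[of a y]) (use assms xu' ylv True x1 in auto)
    qed
  next
    case ny: False
    show ?thesis
    proof (cases "y = 1")
      case y1: True
      show ?thesis
      proof (cases "v = 2")
        case True
        have "HP (Csh 1 a n) (x, 1) (x, 2)" by (rule LOOPi) (use assms xu' y1 True in auto)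
        then show ?thesis using xu' y1 True by simp
      next
        case v2: False
        show ?thesis
        proof (cases "v \<le> n - 1")
          case True
          show ?thesis
          proof (cases "x = 1")
            case False
            show ?thesis by (rule HLL[of a "v - 1"]) (use assms xu' y1 v2 True False in auto)
          next
            case x1: True
            show ?thesis by (rule HRR[of a "v - 1"]) (use assms xu' y1 v2 True x1 in auto)
          qed
        next
          case False
          then have vn: "v = n" using tr by auto
          show ?thesis
          proof (cases "n \<ge> 4")
            case True
            show ?thesis by (rule HLL[of a 2]) (use assms xu' y1 vn True in auto)
          next
            case False
            then have n3': "n = 3" using n3 by auto
            have "HP (Csh 1 a 3) (x, 1) (x, 3)" by (rule BETA1) (use assms xu' y1 vn n3' in auto)
            then show ?thesis using n3' xu' y1 vn by simp
          qed
        qed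
      qed
    next
      case False
      then have yn: "y = n - 1" and vn: "v = n" using ny ylv sr tr n3 by auto
      have "HP (Csh 1 a n) (x, 1) (x, 2)" by (rule LOOPi) (use assms xu' yn vn in auto)
      then have "HP (Csh 1 a n) (x, 2) (x, 1)" by (rule HP_rev)
      then have "HP (Csh 1 a n) (x, n + 1 - 2) (x, n + 1 - 1)" by (rule C_refl) auto
      then show ?thesis using xu' yn vn by simp
    qed
  qed
qed


lemma mainR:
  assumes a2: "2 \<le> a" and n3: "3 \<le> n"
    and sr: "1 \<le> x" "x \<le> a" "1 \<le> y" "y \<le> n" and tr: "1 \<le> u" "u \<le> a" "1 \<le> v" "v \<le> n"
    and ne: "x \<noteq> u \<or> y \<noteq> v" and xu: "x \<le> u"
    and X1: "\<not> (x = a \<and> u = a \<and> ((y = 1 \<and> v = 2) \<or> (y = 2 \<and> v = 1)))"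
    and X2: "\<not> (x = a \<and> u = a \<and> ((y = n - 1 \<and> v = n) \<or> (y = n \<and> v = n - 1)))"
    and X3: "\<not> (a = 2 \<and> y = v \<and> 2 \<le> y \<and> y \<le> n - 1 \<and> x \<noteq> u)"
    and X4: "\<not> (a = 2 \<and> x = 1 \<and> u = 2 \<and> ((y = 1 \<and> v = 2) \<or> (y = 2 \<and> v = 1) \<or> (y = n \<and> v = n - 1) \<or> (y = n - 1 \<and> v = n)))"
    and X5: "\<not> (n = 3 \<and> ((x = a \<and> u = a \<and> (y - v = 2 \<or> v - y = 2)) \<or> (a = 2 \<and> x = 1 \<and> u = 2 \<and> (y - v = 2 \<or> v - y = 2)) \<or> (a > 2 \<and> x < a \<and> u = a \<and> v = 2)))"
  shows "HP (Csh 1 a n) (x, y) (u, v)"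
proof (cases "y \<le> v")
  case True
  show ?thesis
    apply (rule mainB)
    apply (insert assms True)
    apply ((smt (verit))+)
    done
next
  case False
  have "HP (Csh 1 a n) (x, n + 1 - y) (u, n + 1 - v)"
    apply (rule mainB)
    apply (insert assms False)
    apply ((smt (verit))+)
    done
  then have "HP (Csh 1 a n) (x, n + 1 - (n + 1 - y)) (u, n + 1 - (n + 1 - v))" by (rule C_refl) auto
  then show ?thesis by simp
qed

lemma isolated_disc:
  assumes "u \<in> W" "v \<in> W" "u \<noteq> v" "\<forall>w\<in>W. \<not> sg_adj u w"
  shows "\<not> sg_connected W"
proof
  assume "sg_connected W"
  then obtain P where P: "sg_walk W P" "hd P = u" "last P = v" using assms unfolding sg_connected_def by blast
  have "P \<noteq> []" using P by (auto simp: sg_walk_def)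
  have "length P \<ge> 2"
  proof (rule ccontr)
    assume "\<not> length P \<ge> 2"
    moreover have "length P \<noteq> 0" using \<open>P \<noteq> []\<close> by simp
    ultimately have "length P = 1" by arith
    then have "hd P = last P" using \<open>P \<noteq> []\<close> by (simp add: hd_conv_nth last_conv_nth)
    then show False using P assms by auto
  qed
  then have "sg_adj (P ! 0) (P ! Suc 0)" using P by (auto simp: sg_walk_def)
  moreover have "P ! 0 = u" using P \<open>P \<noteq> []\<close> by (simp add: hd_conv_nth)
  moreover have "P ! Suc 0 \<in> W" using P \<open>length P \<ge> 2\<close> by (auto simp: sg_walk_def)
  ultimately show False using assms by auto
qed

lemma sep_disc:
  assumes "u \<in> W" "v \<in> W" "Q u" "\<not> Q v" "\<forall>w\<in>W. \<forall>w'\<in>W. Q w \<longrightarrow> \<not> Q w' \<longrightarrow> \<not> sg_adj w w'"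
  shows "\<not> sg_connected W"
proof
  assume "sg_connected W"
  then obtain P where P: "sg_walk W P" "hd P = u" "last P = v" using assms unfolding sg_connected_def by blast
  have Pne: "P \<noteq> []" using P by (auto simp: sg_walk_def)
  have "\<forall>i < length P. Q (P ! i)"
  proof (intro allI impI)
    fix i assume "i < length P"
    then show "Q (P ! i)"
    proof (induction i)
      case 0
      then show ?case using P Pne assms by (simp add: hd_conv_nth[symmetric])
    next
      case (Suc i)
      then have "Q (P ! i)" by auto
      moreover have "sg_adj (P ! i) (P ! Suc i)" using P Suc by (auto simp: sg_walk_def)
      moreover have "P ! i \<in> W" "P ! Suc i \<in> W" using P Suc by (auto simp: sg_walk_def)
      ultimately show ?case using assms by blast
    qed
  qed
  then have "Q (last P)" using Pne by (simp add: last_conv_nth)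
  then show False using P assms by simp
qed


lemma Cshape_k1: "1 \<le> a \<Longrightarrow> 3 \<le> n \<Longrightarrow> Cshape (a + 1) n 1 (n - 2) 1 = Csh 1 a n"
  by (auto simp: Cshape_def Csh_def)

lemma HP_hp: "HP V s t \<Longrightarrow> \<exists>P. hamiltonian_path V s t P" by (simp add: HP_def)

lemma k1_case:
  assumes a2: "2 \<le> a" and n3: "3 \<le> n"
    and s: "s \<in> Csh 1 a n" and t: "t \<in> Csh 1 a n" and st: "s \<noteq> t" and xle: "fst s \<le> fst t"
    and conn: "sg_connected (Csh 1 a n - {s, t})"
    and nF7: "\<not> F7 (a + 1) n a 1 1 s t"
    and nF8: "\<not> F8 (a + 1) n a 1 1 1 s t"
  shows "HP (Csh 1 a n) s t"
proof -
  define V where "V = Csh 1 a n"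
  define p where "p = (a + 1, 1::int)"
  define r where "r = (a + 1, n)"
  obtain x y where sxy: "s = (x, y)" by fastforce
  obtain u v where tuv: "t = (u, v)" by fastforce
  have pV: "p \<in> V" and rV: "r \<in> V" by (auto simp: V_def Csh_def p_def r_def)
  have memV: "w \<in> V \<longleftrightarrow> w \<in> rect 1 a 1 n \<or> w = p \<or> w = r" for w
    by (auto simp: V_def Csh_def p_def r_def)
  show ?thesis
  proof (cases "s \<in> rect 1 a 1 n")
    case sR: True
    show ?thesis
    proof (cases "t \<in> rect 1 a 1 n")
      case tR: True
      have sr: "1 \<le> x" "x \<le> a" "1 \<le> y" "y \<le> n" using sR sxy by auto
      have tr: "1 \<le> u" "u \<le> a" "1 \<le> v" "v \<le> n" using tR tuv by auto
      have X1: "\<not> (x = a \<and> u = a \<and> ((y = 1 \<and> v = 2) \<or> (y = 2 \<and> v = 1)))"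
      proof
        assume A: "x = a \<and> u = a \<and> ((y = 1 \<and> v = 2) \<or> (y = 2 \<and> v = 1))"
        have "\<not> sg_connected (V - {s, t})"
        proof (rule isolated_disc[of p _ "(1, 1)"])
          show "p \<in> V - {s, t}" using pV A sxy tuv by (auto simp: p_def)
          show "(1, 1) \<in> V - {s, t}" using A sxy tuv a2 n3 by (auto simp: V_def Csh_def)
          show "p \<noteq> (1, 1)" using a2 by (auto simp: p_def)
          show "\<forall>w\<in>V - {s, t}. \<not> sg_adj p w" using A sxy tuv n3 by (auto simp: V_def Csh_def p_def)
        qed
        then show False using conn V_def by simp
      qed
      have X2: "\<not> (x = a \<and> u = a \<and> ((y = n - 1 \<and> v = n) \<or> (y = n \<and> v = n - 1)))"
      proof
        assume A: "x = a \<and> u = a \<and> ((y = n - 1 \<and> v = n) \<or> (y = n \<and> v = n - 1))"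
        have "\<not> sg_connected (V - {s, t})"
        proof (rule isolated_disc[of r _ "(1, 1)"])
          show "r \<in> V - {s, t}" using rV A sxy tuv by (auto simp: r_def)
          show "(1, 1) \<in> V - {s, t}" using A sxy tuv a2 n3 by (auto simp: V_def Csh_def)
          show "r \<noteq> (1, 1)" using a2 by (auto simp: r_def)
          show "\<forall>w\<in>V - {s, t}. \<not> sg_adj r w" using A sxy tuv n3 by (auto simp: V_def Csh_def r_def)
        qed
        then show False using conn V_def by simp
      qed
      have X3: "\<not> (a = 2 \<and> y = v \<and> 2 \<le> y \<and> y \<le> n - 1 \<and> x \<noteq> u)"
      proof
        assume A: "a = 2 \<and> y = v \<and> 2 \<le> y \<and> y \<le> n - 1 \<and> x \<noteq> u"
        have "\<not> sg_connected (V - {s, t})"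
        proof (rule sep_disc[of "(1, 1)" _ "(1, n)" "\<lambda>w. snd w < y"])
          show "(1, 1) \<in> V - {s, t}" using A sxy tuv a2 n3 by (auto simp: V_def Csh_def)
          show "(1, n) \<in> V - {s, t}" using A sxy tuv a2 n3 by (auto simp: V_def Csh_def)
          show "snd (1::int, 1::int) < y" using A by simp
          show "\<not> snd (1::int, n) < y" using A by simp
          show "\<forall>w\<in>V - {s, t}. \<forall>w'\<in>V - {s, t}. snd w < y \<longrightarrow> \<not> snd w' < y \<longrightarrow> \<not> sg_adj w w'"
            using A sxy tuv sr tr by (auto simp: V_def Csh_def sg_adj_def)
        qed
        then show False using conn V_def by simp
      qed
      have X4: "\<not> (a = 2 \<and> x = 1 \<and> u = 2 \<and> ((y = 1 \<and> v = 2) \<or> (y = 2 \<and> v = 1) \<or> (y = n \<and> v = n - 1) \<or> (y = n - 1 \<and> v = n)))"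
        using nF7 sxy tuv by (auto simp: F7_def)
      have X5: "\<not> (n = 3 \<and> ((x = a \<and> u = a \<and> (y - v = 2 \<or> v - y = 2)) \<or> (a = 2 \<and> x = 1 \<and> u = 2 \<and> (y - v = 2 \<or> v - y = 2)) \<or> (a > 2 \<and> x < a \<and> u = a \<and> v = 2)))"
        using nF8 sxy tuv a2 by (auto simp: F8_def abs_if)
      have "HP (Csh 1 a n) (x, y) (u, v)"
        by (rule mainR) (use a2 n3 sr tr st sxy tuv xle X1 X2 X3 X4 X5 in auto)
      then show ?thesis using sxy tuv by simp
    next
      case tnR: False
      then have "t = p \<or> t = r" using t memV V_def by auto
      then show ?thesis
      proof
        assume tp: "t = p"
        show ?thesis unfolding tp p_def by (rule HPp) (use a2 n3 sR in auto)
      next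
        assume trr: "t = r"
        have "HP (Csh 1 a n) (x, n + 1 - y) (a + 1, 1)" by (rule HPp) (use a2 n3 sR sxy in auto)
        then have "HP (Csh 1 a n) (x, n + 1 - (n + 1 - y)) (a + 1, n + 1 - 1)" by (rule C_refl) auto
        then show ?thesis using sxy trr r_def by simp
      qed
    qed
  next
    case snR: False
    then have sp: "s = p \<or> s = r" using s memV V_def by auto
    then have sx: "fst s = a + 1" by (auto simp: p_def r_def)
    then have "t \<notin> rect 1 a 1 n" using xle tuv by auto
    then have tp: "t = p \<or> t = r" using t memV V_def by auto
    have pr: "HP (Csh 1 a n) p r"
      unfolding p_def r_def
      by (rule chain3[OF HP_single[of "(a+1, 1)"] P2_br[of 1 a 1 n "(a, n)"] HP_single[of "(a+1, n)"]])
        (use a2 n3 in \<open>auto simp: Csh_def\<close>)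
    show ?thesis
    proof (cases "s = p")
      case True
      then have "t = r" using tp st by auto
      then show ?thesis using pr True by simp
    next
      case False
      then have "s = r" "t = p" using sp tp st by auto
      then show ?thesis using HP_rev[OF pr] by simp
    qed
  qed
qed


lemma k2_set:
  assumes "2 \<le> k" "a = m - k" "2 \<le> a" "3 \<le> n"
  shows "Cshape m n k (n - 2) 1 = rect 1 a 1 n \<union> rect (a + 1) m 1 1 \<union> rect (a + 1) m n n"
  using assms by (auto simp: Cshape_def)

lemma k2_deg1:
  assumes "2 \<le> k" "a = m - k" "2 \<le> a" "3 \<le> n"
  shows "sg_deg (Cshape m n k (n - 2) 1) (m, 1) = 1"
proof -
  have "{w \<in> Cshape m n k (n - 2) 1. sg_adj (m, 1) w} = {(m - 1, 1)}"
    using assms by (auto simp: Cshape_def sg_adj_def)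
  then show ?thesis by (simp add: sg_deg_def)
qed

lemma k2_degn:
  assumes "2 \<le> k" "a = m - k" "2 \<le> a" "3 \<le> n"
  shows "sg_deg (Cshape m n k (n - 2) 1) (m, n) = 1"
proof -
  have "{w \<in> Cshape m n k (n - 2) 1. sg_adj (m, n) w} = {(m - 1, n)}"
    using assms by (auto simp: Cshape_def sg_adj_def)
  then show ?thesis by (simp add: sg_deg_def)
qed

lemma k2_path:
  assumes "2 \<le> k" "a = m - k" "2 \<le> a" "3 \<le> n"
  shows "HP (Cshape m n k (n - 2) 1) (m, 1) (m, n)"
  by (rule chain3[OF rowl[of "a + 1" m 1] P2_br[of 1 a 1 n "(a, n)"] rowr[of "a + 1" m n]])
    (use assms in \<open>auto simp: Cshape_def\<close>)

theorem lemma9: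
  fixes m n k l c d a :: int and s t :: vtx
  assumes "m \<ge> 2" and "n \<ge> 3" and "k \<ge> 1" and "l \<ge> 1" and "c \<ge> 1"
    and "d = n - l - c" and "d \<ge> 1" and "a = m - k" and "a \<ge> 1"
    and "a > 1" and "c = 1" and "d = 1"
    and "s \<in> Cshape m n k l c" and "t \<in> Cshape m n k l c" and "s \<noteq> t"
    and "fst s \<le> fst t"
    and "\<not> F1 (Cshape m n k l c) s t"
    and "\<not> F3 (Cshape m n k l c) s t"
    and "\<not> F7 m n a c d s t"
    and "\<not> F8 m n a k c d s t"
  shows "\<exists>P. hamiltonian_path (Cshape m n k l c) s t P"
proof -
  have c1: "c = 1" and d1: "d = 1" and ll: "l = n - 2" using assms by auto
  have a2: "2 \<le> a" and n3: "3 \<le> n" using assms by auto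
  show ?thesis
  proof (cases "k = 1")
    case True
    have m: "m = a + 1" using assms True by auto
    have V: "Cshape m n k l c = Csh 1 a n" using Cshape_k1[of a n] a2 n3 m True ll c1 by simp
    have sub: "{s, t} \<subseteq> Cshape m n k l c" using assms by auto
    have conn: "sg_connected (Csh 1 a n - {s, t})"
      using assms(17) sub V unfolding F1_def vertex_cut_def by auto
    have nF7: "\<not> F7 (a + 1) n a 1 1 s t" using assms(19) m c1 d1 by simp
    have nF8: "\<not> F8 (a + 1) n a 1 1 1 s t" using assms(20) m c1 d1 True by simp
    have "HP (Csh 1 a n) s t"
      by (rule k1_case[OF a2 n3 _ _ assms(15) assms(16) conn nF7 nF8]) (use assms(13,14) V in auto)
    then show ?thesis using V by (simp add: HP_def)
  next
    case False
    then have k2: "2 \<le> k" using assms by auto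
    define V where "V = Cshape m n k l c"
    have VV: "V = Cshape m n k (n - 2) 1" using V_def ll c1 by simp
    have d1': "sg_deg V (m, 1) = 1" using k2_deg1[OF k2 assms(8) a2 n3] VV by simp
    have dn': "sg_deg V (m, n) = 1" using k2_degn[OF k2 assms(8) a2 n3] VV by simp
    have m1V: "(m, 1) \<in> V" and mnV: "(m, n) \<in> V" using VV assms by (auto simp: Cshape_def)
    have "(m, 1) = s \<or> (m, 1) = t" using assms(18) d1' m1V unfolding F3_def V_def by blast
    moreover have "(m, n) = s \<or> (m, n) = t" using assms(18) dn' mnV unfolding F3_def V_def by blast
    moreover have "(m, 1) \<noteq> (m, n)" using n3 by simp
    ultimately have st: "(s = (m, 1) \<and> t = (m, n)) \<or> (s = (m, n) \<and> t = (m, 1))" using assms(15) by auto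
    have P: "HP V (m, 1) (m, n)" using k2_path[OF k2 assms(8) a2 n3] VV by simp
    from st show ?thesis
    proof
      assume "s = (m, 1) \<and> t = (m, n)"
      then show ?thesis using P V_def by (simp add: HP_def)
    next
      assume "s = (m, n) \<and> t = (m, 1)"
      then show ?thesis using HP_rev[OF P] V_def by (simp add: HP_def)
    qed
  qed
qed


end
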